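(* Assume $\alpha_1,\dots,\alpha_N,u,v\in\mathbb R$ satisfy $\alpha_i+\alpha_j>0$, $\alpha_i+u>0$, $\alpha_i+v>0$ for all $i,j$, and additionally $u+v>0$. For any down-right path $\mathcal P$ and any fixed $\lambda_1^{(0)}\in\mathbb R$, $$Z_{\mathrm{LG}}=\int_{\mathbb R^{2N+1}}\mathrm{wt}^{\mathcal{GP}}_{\mathrm{LG}}(\boldsymbol\lambda)\prod_{(i,j)\ne(1,0)}d\lambda_i^{(j)}$$ (integral over $\lambda_i^{(j)}$, $i\in\{1,2\}$, $0\le j\le N$, $(i,j)\ne(1,0)$) is finite and does not depend on the choice of $\mathcal P$ nor of $\lambda_1^{(0)}$.
   Context: Fix $N\ge1$, extend $\alpha_{j+kN}=\alpha_j$. Strip $\{(n,m)\in\mathbb Z^2:0\le m\le n\le m+N\}$. A down-right path is a sequence of strip vertices $\mathbf p_0=(m_0,m_0),\mathbf p_1,\dots,\mathbf p_N$ with steps $\mathbf p_j-\mathbf p_{j-1}\in\{(1,0),(0,-1)\}$; edge $\mathsf e_j$ from $\mathbf p_{j-1}$ to $\mathbf p_j$ has label $\ell_j=\alpha_n$ if it is the horizontal edge $(n-1,m)\to(n,m)$ and $\ell_j=\alpha_m$ if it is the vertical edge between $(n,m-1)$ and $(n,m)$. Set $(\mathrm{up}(j),\mathrm{low}(j))=(j,j-1)$ if $\mathsf e_j$ horizontal, $(j-1,j)$ if vertical. With $f_\theta(x)=e^{-\theta x-e^{-x}}$, for $\boldsymbol\lambda=(\lambda_i^{(j)})\in\mathbb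 R^{2N+2}$, $$\mathrm{wt}^{\mathcal{GP}}_{\mathrm{LG}}(\boldsymbol\lambda)=e^{-u(\lambda_1^{(0)}-\lambda_2^{(0)})}e^{-v(\lambda_1^{(N)}-\lambda_2^{(N)})}\prod_{j=1}^N\Big[\prod_{i=1}^2f_{\ell_j}\big(\lambda_i^{(\mathrm{up}(j))}-\lambda_i^{(\mathrm{low}(j))}\big)\Big]e^{-e^{-(\lambda_1^{(\mathrm{low}(j))}-\lambda_2^{(\mathrm{up}(j))})}}.$$ *)

theory Defs
  imports "HOL-Analysis.Analysis"
begin

definition alpha_ext :: "nat \<Rightarrow> (nat \<Rightarrow> real) \<Rightarrow> int \<Rightarrow> real" where
  "alpha_ext N a n = a (nat ((n - 1) mod int N) + 1)"

definition ffun :: "real \<Rightarrow> real \<Rightarrow> real" where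
  "ffun \<theta> x = exp (- \<theta> * x - exp (- x))"

definition in_strip :: "nat \<Rightarrow> int \<times> int \<Rightarrow> bool" where
  "in_strip N p \<longleftrightarrow> 0 \<le> snd p \<and> snd p \<le> fst p \<and> fst p \<le> snd p + int N"

text \<open>A path is encoded by its starting diagonal point (m0,m0) and the list of
  its steps: True = horizontal step (1,0), False = vertical step (0,-1).
  The vertex p_j is obtained after the first j steps.\<close>
definition path_vertex :: "int \<Rightarrow> bool list \<Rightarrow> nat \<Rightarrow> int \<times> int" where
  "path_vertex m0 s j =
     (m0 + int (length (filter id (take j s))),
      m0 - int (length (filter Not (take j s))))"

definition is_down_right_path :: "nat \<Rightarrow> int \<Rightarrow> bool list \<Rightarrow> bool" where
  "is_down_right_path N m0 s \<longleftrightarrow>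
     length s = N \<and> (\<forall>j\<le>N. in_strip N (path_vertex m0 s j))"

text \<open>Label of edge e_j (1 <= j <= N): alpha_n for the horizontal edge
  (n-1,m) -> (n,m), alpha_m for the vertical edge between (n,m-1) and (n,m).\<close>
definition edge_label :: "nat \<Rightarrow> (nat \<Rightarrow> real) \<Rightarrow> int \<Rightarrow> bool list \<Rightarrow> nat \<Rightarrow> real" where
  "edge_label N a m0 s j =
     (if s ! (j - 1) then alpha_ext N a (fst (path_vertex m0 s j))
      else alpha_ext N a (snd (path_vertex m0 s (j - 1))))"

definition up_idx :: "bool list \<Rightarrow> nat \<Rightarrow> nat" where
  "up_idx s j = (if s ! (j - 1) then j else j - 1)"

definition low_idx :: "bool list \<Rightarrow> nat \<Rightarrow> nat" where
  "low_idx s j = (if s ! (j - 1) then j - 1 else j)"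

text \<open>The weight; lam (i,j) stands for lambda_i^(j).\<close>
definition wt_LG :: "nat \<Rightarrow> (nat \<Rightarrow> real) \<Rightarrow> real \<Rightarrow> real \<Rightarrow> int \<Rightarrow> bool list
    \<Rightarrow> (nat \<times> nat \<Rightarrow> real) \<Rightarrow> real" where
  "wt_LG N a u v m0 s lam =
     exp (- u * (lam (1,0) - lam (2,0))) * exp (- v * (lam (1,N) - lam (2,N))) *
     (\<Prod>j\<in>{1..N}.
        (\<Prod>i\<in>{1,2::nat}. ffun (edge_label N a m0 s j) (lam (i, up_idx s j) - lam (i, low_idx s j)))
        * exp (- exp (- (lam (1, low_idx s j) - lam (2, up_idx s j)))))"

definition int_vars :: "nat \<Rightarrow> (nat \<times> nat) set" where
  "int_vars N = ({1,2} \<times> {0..N}) - {(1,0)}"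

definition Z_LG :: "nat \<Rightarrow> (nat \<Rightarrow> real) \<Rightarrow> real \<Rightarrow> real \<Rightarrow> int \<Rightarrow> bool list \<Rightarrow> real \<Rightarrow> ennreal" where
  "Z_LG N a u v m0 s x0 =
     (\<integral>\<^sup>+ lam. ennreal (wt_LG N a u v m0 s (lam((1,0) := x0)))
        \<partial>(PiM (int_vars N) (\<lambda>_. lborel)))"

end

theory Submission
  imports Defs
begin


definition kern :: "bool \<Rightarrow> real \<Rightarrow> real \<Rightarrow> real \<Rightarrow> real \<Rightarrow> real \<Rightarrow> real" where
  "kern b a x1 x2 y1 y2 = (if b then ffun a (y1-x1) * ffun a (y2-x2) * exp(-exp(-(x1-y2)))
      else ffun a (x1-y1) * ffun a (x2-y2) * exp(-exp(-(y1-x2))))"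

fun chain :: "real \<Rightarrow> (bool \<times> real) list \<Rightarrow> real \<Rightarrow> real \<Rightarrow> ennreal" where
  "chain v [] x1 x2 = ennreal (exp (- (v * (x1 - x2))))"
| "chain v ((b,a)#ks) x1 x2 = (\<integral>\<^sup>+y1. \<integral>\<^sup>+y2. ennreal (kern b a x1 x2 y1 y2) * chain v ks y1 y2 \<partial>lborel \<partial>lborel)"

lemma kern_meas[measurable (raw)]:
  assumes "f1 \<in> borel_measurable M" "f2 \<in> borel_measurable M" "f3 \<in> borel_measurable M" "f4 \<in> borel_measurable M"
  shows "(\<lambda>w. kern b a (f1 w) (f2 w) (f3 w) (f4 w)) \<in> borel_measurable M"
  unfolding kern_def ffun_def using assms by measurable

lemma kern_nonneg: "kern b a x1 x2 y1 y2 \<ge> 0"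
  unfolding kern_def ffun_def by auto

lemma chain_meas[measurable]: "(\<lambda>(x1,x2). chain v ks x1 x2) \<in> borel_measurable (lborel \<Otimes>\<^sub>M lborel)"
proof (induction ks)
  case Nil
  then show ?case by simp
next
  case (Cons k ks)
  obtain b a where k: "k = (b,a)" by force
  show ?case unfolding k chain.simps using Cons by measurable
qed

lemma chain_meas'[measurable (raw)]:
  assumes "f1 \<in> borel_measurable M" "f2 \<in> borel_measurable M"
  shows "(\<lambda>w. chain v ks (f1 w) (f2 w)) \<in> borel_measurable M"
proof -
  have "(\<lambda>w. (f1 w, f2 w)) \<in> measurable M (lborel \<Otimes>\<^sub>M lborel)"
    using assms by measurable
  from measurable_compose[OF this chain_meas] show ?thesis by simp
qed

definition I2 :: "(real \<Rightarrow> real \<Rightarrow> ennreal) \<Rightarrow> ennreal" where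
  "I2 F = (\<integral>\<^sup>+y. F (fst y) (snd y) \<partial>(lborel \<Otimes>\<^sub>M lborel))"

lemma I2_iter:
  assumes "case_prod F \<in> borel_measurable (lborel \<Otimes>\<^sub>M lborel)"
  shows "(\<integral>\<^sup>+y1. \<integral>\<^sup>+y2. F y1 y2 \<partial>lborel \<partial>lborel) = I2 F"
  unfolding I2_def using lborel.nn_integral_fst[OF assms] by (simp add: case_prod_beta')

interpretation P2: pair_sigma_finite "lborel \<Otimes>\<^sub>M lborel :: (real\<times>real) measure" "lborel \<Otimes>\<^sub>M lborel :: (real\<times>real) measure"
  by (simp add: lborel_prod pair_sigma_finite_def lborel.sigma_finite_measure_axioms)

lemma I2_swap:
  assumes "(\<lambda>(y,z). F (fst y) (snd y) (fst z) (snd z)) \<in> borel_measurable ((lborel \<Otimes>\<^sub>M lborel) \<Otimes>\<^sub>M (lborel \<Otimes>\<^sub>M lborel))"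
  shows "I2 (\<lambda>y1 y2. I2 (\<lambda>z1 z2. F y1 y2 z1 z2)) = I2 (\<lambda>z1 z2. I2 (\<lambda>y1 y2. F y1 y2 z1 z2))"
  unfolding I2_def using P2.Fubini'[of "\<lambda>y z. F (fst y) (snd y) (fst z) (snd z)"] assms by simp

definition Phi :: "real \<Rightarrow> real \<Rightarrow> real \<Rightarrow> ennreal" where
  "Phi c P Q = (\<integral>\<^sup>+t. ennreal (exp (c*t - P*exp t - Q*exp(-t))) \<partial>lborel)"

lemma Phi_refl: "Phi c P Q = Phi (-c) Q P"
  unfolding Phi_def
  by (subst nn_integral_real_affine[where c="-1" and t=0]) (auto simp: algebra_simps)

lemma Phi_shift: "Phi c P Q = ennreal (exp (c * s)) * Phi c (P * exp s) (Q * exp (- s))"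
proof -
  have "Phi c P Q = (\<integral>\<^sup>+t. ennreal (exp (c*(s+t) - P*exp (s+t) - Q*exp(-(s+t)))) \<partial>lborel)"
    unfolding Phi_def
    by (subst nn_integral_real_affine[where c="1" and t=s]) (auto simp: algebra_simps)
  also have "\<dots> = (\<integral>\<^sup>+t. ennreal (exp (c * s)) * ennreal (exp (c*t - (P * exp s)*exp t - (Q * exp (- s))*exp(-t))) \<partial>lborel)"
    by (intro nn_integral_cong) (simp add: ennreal_mult'[symmetric] exp_add[symmetric] exp_diff algebra_simps)
  also have "\<dots> = ennreal (exp (c * s)) * Phi c (P * exp s) (Q * exp (- s))"
    unfolding Phi_def by (subst nn_integral_cmult) auto
  finally show ?thesis .
qed

lemma Phi_const: "(\<integral>\<^sup>+t. ennreal (exp (k + c*t - P*exp t - Q*exp(-t))) \<partial>lborel) = ennreal (exp k) * Phi c P Q"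
proof -
  have "(\<integral>\<^sup>+t. ennreal (exp (k + c*t - P*exp t - Q*exp(-t))) \<partial>lborel)
     = (\<integral>\<^sup>+t. ennreal (exp k) * ennreal (exp (c*t - P*exp t - Q*exp(-t))) \<partial>lborel)"
    by (intro nn_integral_cong) (simp add: ennreal_mult'[symmetric] exp_add[symmetric] algebra_simps)
  then show ?thesis unfolding Phi_def by (simp add: nn_integral_cmult)
qed

lemma iter_prod:
  assumes [measurable]: "p1 \<in> borel_measurable borel" "p2 \<in> borel_measurable borel"
  shows "(\<integral>\<^sup>+y1. \<integral>\<^sup>+y2. ennreal (p1 y1) * ennreal (p2 y2) \<partial>lborel \<partial>lborel)
       = (\<integral>\<^sup>+y1. ennreal (p1 y1) \<partial>lborel) * (\<integral>\<^sup>+y2. ennreal (p2 y2) \<partial>lborel)"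
  by (simp add: nn_integral_cmult nn_integral_multc)

definition EE :: "real \<Rightarrow> real \<Rightarrow> real \<Rightarrow> real \<Rightarrow> real \<Rightarrow> real" where
  "EE k c P Q t = exp (k + c*t - P*exp t - Q*exp(-t))"

lemma EE_meas[measurable]: "EE k c P Q \<in> borel_measurable borel"
  unfolding EE_def by measurable

lemma iter_EE: "(\<integral>\<^sup>+y1. \<integral>\<^sup>+y2. ennreal (EE k1 c1 P1 Q1 y1 * EE k2 c2 P2 Q2 y2) \<partial>lborel \<partial>lborel)
   = ennreal (exp k1) * Phi c1 P1 Q1 * (ennreal (exp k2) * Phi c2 P2 Q2)"
proof -
  have "(\<integral>\<^sup>+y1. \<integral>\<^sup>+y2. ennreal (EE k1 c1 P1 Q1 y1 * EE k2 c2 P2 Q2 y2) \<partial>lborel \<partial>lborel)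
     = (\<integral>\<^sup>+y1. \<integral>\<^sup>+y2. ennreal (EE k1 c1 P1 Q1 y1) * ennreal (EE k2 c2 P2 Q2 y2) \<partial>lborel \<partial>lborel)"
    by (simp add: ennreal_mult' EE_def)
  also have "\<dots> = (\<integral>\<^sup>+y1. ennreal (EE k1 c1 P1 Q1 y1) \<partial>lborel) * (\<integral>\<^sup>+y2. ennreal (EE k2 c2 P2 Q2 y2) \<partial>lborel)"
    by (rule iter_prod) measurable
  finally show ?thesis unfolding EE_def Phi_const .
qed

lemma exp_neg_diff: "exp (- (p - q)) = exp q * exp (- (p::real))"
proof -
  have "- (p - q) = q + - p" by simp
  then show ?thesis by (simp only: mult_exp_exp)
qed

lemma kswap_real1: "kern True a x1 x2 y1 y2 * kern False b y1 y2 z1 z2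
  = EE (a*x1 + b*z1) (-(a+b)) 0 (exp x1 + exp z1) y1 * EE (a*x2+b*z2) (-(a+b)) (exp (-x1) + exp (-z1)) (exp x2 + exp z2) y2"
  unfolding kern_def ffun_def EE_def exp_neg_diff
  apply (simp only: if_True if_False mult_exp_exp)
  apply (rule arg_cong[where f=exp])
  apply (simp add: algebra_simps exp_diff exp_minus divide_inverse)
  done

lemma kswap_real2: "kern False b x1 x2 w1 w2 * kern True a w1 w2 z1 z2
  = EE (-(b*x1) - a*z1) (a+b) (exp (-x1) + exp (-z1)) (exp x2 + exp z2) w1 * EE (-(b*x2) - a*z2) (a+b) (exp (-x2) + exp (-z2)) 0 w2"
  unfolding kern_def ffun_def EE_def exp_neg_diff
  apply (simp only: if_True if_False mult_exp_exp)
  apply (rule arg_cong[where f=exp])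
  apply (simp add: algebra_simps exp_diff exp_minus divide_inverse)
  done

lemma kswap_point:
  "(\<integral>\<^sup>+y1. \<integral>\<^sup>+y2. ennreal (kern True a x1 x2 y1 y2 * kern False b y1 y2 z1 z2) \<partial>lborel \<partial>lborel)
 = (\<integral>\<^sup>+y1. \<integral>\<^sup>+y2. ennreal (kern False b x1 x2 y1 y2 * kern True a y1 y2 z1 z2) \<partial>lborel \<partial>lborel)"
proof -
  define c where "c = a + b"
  define X where "X = exp x1 + exp z1"
  define B where "B = exp (-x1) + exp (-z1)"
  define A where "A = exp x2 + exp z2"
  define A' where "A' = exp (-x2) + exp (-z2)"
  have pos: "X > 0" "B > 0" "A > 0" "A' > 0" unfolding X_def B_def A_def A'_def by (auto intro: add_pos_pos)
  have XB: "X = B * exp (x1 + z1)" unfolding X_def B_def by (simp add: algebra_simps exp_add[symmetric] mult_exp_exp)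
  have AA: "A' = A * exp (-(x2 + z2))" unfolding A_def A'_def by (simp add: algebra_simps mult_exp_exp)
  define s where "s = ln A' - ln X"
  define s' where "s' = ln B - ln A"
  have es: "X * exp s = A'" unfolding s_def using pos by (simp add: exp_diff)
  have es1: "A * exp s' = B" unfolding s'_def using pos by (simp add: exp_diff)
  have es2: "B * exp (- s') = A" unfolding s'_def using pos by (simp add: exp_minus exp_diff)
  have sum: "s + s' = -(x1 + z1 + x2 + z2)"
  proof -
    have "ln X = ln B + (x1 + z1)" using XB pos by (simp add: ln_mult)
    moreover have "ln A' = ln A - (x2 + z2)" using AA pos by (simp add: ln_mult)
    ultimately show ?thesis unfolding s_def s'_def by simp
  qed
  have L: "(\<integral>\<^sup>+y1. \<integral>\<^sup>+y2. ennreal (kern True a x1 x2 y1 y2 * kern False b y1 y2 z1 z2) \<partial>lborel \<partial>lborel)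
      = ennreal (exp (a*x1 + b*z1)) * Phi (-c) 0 X * (ennreal (exp (a*x2+b*z2)) * Phi (-c) B A)"
    unfolding kswap_real1 iter_EE c_def X_def B_def A_def ..
  have R: "(\<integral>\<^sup>+y1. \<integral>\<^sup>+y2. ennreal (kern False b x1 x2 y1 y2 * kern True a y1 y2 z1 z2) \<partial>lborel \<partial>lborel)
      = ennreal (exp (-(b*x1) - a*z1)) * Phi c B A * (ennreal (exp (-(b*x2) - a*z2)) * Phi c A' 0)"
    unfolding kswap_real2 iter_EE c_def B_def A_def A'_def ..
  have p1: "Phi (-c) 0 X = ennreal (exp (c * s)) * Phi c A' 0"
    by (subst Phi_refl, subst Phi_shift[where s=s]) (simp add: es)
  have p2: "Phi (-c) B A = ennreal (exp (c * s')) * Phi c B A"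
    by (subst Phi_refl, subst Phi_shift[where s=s']) (simp add: es1 es2)
  have e: "exp (a*x1 + b*z1) * exp (c * s) * (exp (a*x2+b*z2) * exp (c * s')) = exp (-(b*x1) - a*z1) * exp (-(b*x2) - a*z2)"
  proof -
    have "a*x1 + b*z1 + c * s + (a*x2+b*z2 + c * s') = -(b*x1) - a*z1 + (-(b*x2) - a*z2)"
    proof -
      have "c * s + c * s' = c * (s + s')" by (simp add: algebra_simps)
      then show ?thesis unfolding sum c_def by (simp add: algebra_simps)
    qed
    then show ?thesis by (simp add: mult_exp_exp)
  qed
  show ?thesis unfolding L R p1 p2
  proof -
    have "ennreal (exp (a*x1 + b*z1)) * (ennreal (exp (c * s)) * Phi c A' 0) * (ennreal (exp (a*x2+b*z2)) * (ennreal (exp (c * s')) * Phi c B A))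
      = ennreal (exp (a*x1 + b*z1) * exp (c * s) * (exp (a*x2+b*z2) * exp (c * s'))) * (Phi c B A * Phi c A' 0)"
      by (simp add: ennreal_mult' mult_ac)
    also have "\<dots> = ennreal (exp (-(b*x1) - a*z1)) * Phi c B A * (ennreal (exp (-(b*x2) - a*z2)) * Phi c A' 0)"
      unfolding e by (simp add: ennreal_mult' mult_ac)
    finally show "ennreal (exp (a*x1 + b*z1)) * (ennreal (exp (c * s)) * Phi c A' 0) * (ennreal (exp (a*x2+b*z2)) * (ennreal (exp (c * s')) * Phi c B A))
      = ennreal (exp (-(b*x1) - a*z1)) * Phi c B A * (ennreal (exp (-(b*x2) - a*z2)) * Phi c A' 0)" .
  qed
qed

lemma I2_meas[measurable (raw)]:
  assumes "(\<lambda>(w,z). F w (fst z) (snd z)) \<in> borel_measurable (M \<Otimes>\<^sub>M (lborel \<Otimes>\<^sub>M lborel))"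
  shows "(\<lambda>w. I2 (F w)) \<in> borel_measurable M"
  unfolding I2_def using assms by measurable

lemma chain_compose:
  "chain v ((b1,a1)#(b2,a2)#ks) x1 x2 = I2 (\<lambda>z1 z2. chain v ks z1 z2 *
     (\<integral>\<^sup>+y1. \<integral>\<^sup>+y2. ennreal (kern b1 a1 x1 x2 y1 y2 * kern b2 a2 y1 y2 z1 z2) \<partial>lborel \<partial>lborel))"
proof -
  have "chain v ((b1,a1)#(b2,a2)#ks) x1 x2 = (\<integral>\<^sup>+y1. \<integral>\<^sup>+y2. ennreal (kern b1 a1 x1 x2 y1 y2) *
      (\<integral>\<^sup>+z1. \<integral>\<^sup>+z2. ennreal (kern b2 a2 y1 y2 z1 z2) * chain v ks z1 z2 \<partial>lborel \<partial>lborel) \<partial>lborel \<partial>lborel)"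
    by simp
  also have "\<dots> = (\<integral>\<^sup>+y1. \<integral>\<^sup>+y2. (\<integral>\<^sup>+z1. \<integral>\<^sup>+z2. ennreal (kern b1 a1 x1 x2 y1 y2) * (ennreal (kern b2 a2 y1 y2 z1 z2) * chain v ks z1 z2) \<partial>lborel \<partial>lborel) \<partial>lborel \<partial>lborel)"
    by (simp add: nn_integral_cmult)
  also have "\<dots> = I2 (\<lambda>y1 y2. I2 (\<lambda>z1 z2. ennreal (kern b1 a1 x1 x2 y1 y2) * (ennreal (kern b2 a2 y1 y2 z1 z2) * chain v ks z1 z2)))"
    apply (subst I2_iter[symmetric])
     apply measurable
    apply (subst I2_iter[symmetric])
     apply measurable
    done
  also have "\<dots> = I2 (\<lambda>z1 z2. I2 (\<lambda>y1 y2. ennreal (kern b1 a1 x1 x2 y1 y2) * (ennreal (kern b2 a2 y1 y2 z1 z2) * chain v ks z1 z2)))"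
    by (rule I2_swap) measurable
  also have "\<dots> = I2 (\<lambda>z1 z2. chain v ks z1 z2 * I2 (\<lambda>y1 y2. ennreal (kern b1 a1 x1 x2 y1 y2 * kern b2 a2 y1 y2 z1 z2)))"
    unfolding I2_def
    by (subst nn_integral_cmult[symmetric]) (auto simp: ennreal_mult' kern_nonneg mult_ac intro!: nn_integral_cong)
  also have "\<dots> = I2 (\<lambda>z1 z2. chain v ks z1 z2 *
     (\<integral>\<^sup>+y1. \<integral>\<^sup>+y2. ennreal (kern b1 a1 x1 x2 y1 y2 * kern b2 a2 y1 y2 z1 z2) \<partial>lborel \<partial>lborel))"
    by (subst I2_iter) measurable
  finally show ?thesis .
qed

lemma chain_swap:
  "chain v ((True,a)#(False,b)#ks) x1 x2 = chain v ((False,b)#(True,a)#ks) x1 x2"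
  unfolding chain_compose kswap_point ..

lemma end_real1: "kern True a x1 x2 y1 y2 * exp (- (v * (y1 - y2)))
  = EE (a*x1) (-(a+v)) 0 (exp x1) y1 * EE (a*x2) (v-a) (exp (-x1)) (exp x2) y2"
  unfolding kern_def ffun_def EE_def exp_neg_diff
  apply (simp only: if_True if_False mult_exp_exp)
  apply (rule arg_cong[where f=exp])
  apply (simp add: algebra_simps exp_diff exp_minus divide_inverse)
  done

lemma end_real2: "kern False a x1 x2 y1 y2 * exp (- (v * (y1 - y2)))
  = EE (-(a*x1)) (a-v) (exp (-x1)) (exp x2) y1 * EE (-(a*x2)) (a+v) (exp (-x2)) 0 y2"
  unfolding kern_def ffun_def EE_def exp_neg_diff
  apply (simp only: if_True if_False mult_exp_exp)
  apply (rule arg_cong[where f=exp])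
  apply (simp add: algebra_simps exp_diff exp_minus divide_inverse)
  done

lemma chain_end1: "chain v [(True,a)] x1 x2 = chain v [(False,a)] x1 x2"
proof -
  have L: "chain v [(True,a)] x1 x2 = ennreal (exp (a*x1)) * Phi (-(a+v)) 0 (exp x1) * (ennreal (exp (a*x2)) * Phi (v-a) (exp (-x1)) (exp x2))"
    by (simp add: ennreal_mult'[symmetric] kern_nonneg end_real1 iter_EE)
  have R: "chain v [(False,a)] x1 x2 = ennreal (exp (-(a*x1))) * Phi (a-v) (exp (-x1)) (exp x2) * (ennreal (exp (-(a*x2))) * Phi (a+v) (exp (-x2)) 0)"
    by (simp add: ennreal_mult'[symmetric] kern_nonneg end_real2 iter_EE)
  have p1: "Phi (-(a+v)) 0 (exp x1) = ennreal (exp ((a+v) * (-x1-x2))) * Phi (a+v) (exp (-x2)) 0"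
    by (subst Phi_refl, subst Phi_shift[where s="-x1-x2"]) (simp add: mult_exp_exp add.commute)
  have p2: "Phi (v-a) (exp (-x1)) (exp x2) = ennreal (exp ((a-v) * (-x1-x2))) * Phi (a-v) (exp (-x1)) (exp x2)"
    by (subst Phi_refl, subst Phi_shift[where s="-x1-x2"]) (simp add: mult_exp_exp)
  have e: "exp (a*x1) * exp ((a+v) * (-x1-x2)) * (exp (a*x2) * exp ((a-v) * (-x1-x2))) = exp (-(a*x1)) * exp (-(a*x2))"
    by (simp add: mult_exp_exp algebra_simps)
  have "ennreal (exp (a*x1)) * (ennreal (exp ((a+v) * (-x1-x2))) * Phi (a+v) (exp (-x2)) 0) * (ennreal (exp (a*x2)) * (ennreal (exp ((a-v) * (-x1-x2))) * Phi (a-v) (exp (-x1)) (exp x2)))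
     = ennreal (exp (a*x1) * exp ((a+v) * (-x1-x2)) * (exp (a*x2) * exp ((a-v) * (-x1-x2)))) * (Phi (a+v) (exp (-x2)) 0 * Phi (a-v) (exp (-x1)) (exp x2))"
    by (simp add: ennreal_mult' mult_ac)
  also have "\<dots> = ennreal (exp (-(a*x1))) * Phi (a-v) (exp (-x1)) (exp x2) * (ennreal (exp (-(a*x2))) * Phi (a+v) (exp (-x2)) 0)"
    unfolding e by (simp add: ennreal_mult' mult_ac)
  finally show ?thesis unfolding L R p1 p2 .
qed

lemma chain_cons_cong: "(\<And>y1 y2. chain v ks y1 y2 = chain v ks' y1 y2) \<Longrightarrow> chain v (k#ks) x1 x2 = chain v (k#ks') x1 x2"
  by (cases k) simp

lemma chain_end: "chain v (ks @ [(True,a)]) x1 x2 = chain v (ks @ [(False,a)]) x1 x2"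
proof (induction ks arbitrary: x1 x2)
  case Nil
  then show ?case using chain_end1 by simp
next
  case (Cons k ks)
  then show ?case using chain_cons_cong[of v "ks @ [(True,a)]" "ks @ [(False,a)]" k] by simp
qed

lemma swapR:
  fixes F :: "real \<Rightarrow> real \<Rightarrow> ennreal"
  assumes "case_prod F \<in> borel_measurable (lborel \<Otimes>\<^sub>M lborel)"
  shows "(\<integral>\<^sup>+x. \<integral>\<^sup>+y. F x y \<partial>lborel \<partial>lborel) = (\<integral>\<^sup>+y. \<integral>\<^sup>+x. F x y \<partial>lborel \<partial>lborel)"
  using lborel_pair.Fubini'[OF assms] by simp

lemma shiftR:
  fixes f :: "real \<Rightarrow> ennreal"
  assumes "f \<in> borel_measurable borel"
  shows "(\<integral>\<^sup>+x. f x \<partial>lborel) = (\<integral>\<^sup>+x. f (t + x) \<partial>lborel)"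
  using nn_integral_real_affine[OF assms, of 1 t] by simp

lemma reflR:
  fixes f :: "real \<Rightarrow> ennreal"
  assumes "f \<in> borel_measurable borel"
  shows "(\<integral>\<^sup>+x. f x \<partial>lborel) = (\<integral>\<^sup>+x. f (t - x) \<partial>lborel)"
  using nn_integral_real_affine[OF assms, of "-1" t] by simp

lemma ffun_meas[measurable (raw)]:
  assumes [measurable]: "f \<in> borel_measurable M"
  shows "(\<lambda>w. ffun a (f w)) \<in> borel_measurable M"
  unfolding ffun_def by measurable

lemma ffun_pos: "ffun a x > 0" unfolding ffun_def by simp

lemma chain_shift: "chain v ks (x1 + t) (x2 + t) = chain v ks x1 x2"
proof (induction ks arbitrary: x1 x2)
  case Nil
  then show ?case by (simp add: algebra_simps)
next
  case (Cons k ks)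
  obtain b a where k: "k = (b,a)" by force
  have "chain v (k#ks) (x1 + t) (x2 + t) = (\<integral>\<^sup>+y1. \<integral>\<^sup>+y2. ennreal (kern b a (x1+t) (x2+t) y1 y2) * chain v ks y1 y2 \<partial>lborel \<partial>lborel)"
    by (simp add: k)
  also have "\<dots> = (\<integral>\<^sup>+y1. \<integral>\<^sup>+y2. ennreal (kern b a (x1+t) (x2+t) (t+y1) (t+y2)) * chain v ks (t+y1) (t+y2) \<partial>lborel \<partial>lborel)"
  proof -
    have "\<And>y1. (\<integral>\<^sup>+y2. ennreal (kern b a (x1+t) (x2+t) y1 y2) * chain v ks y1 y2 \<partial>lborel)
       = (\<integral>\<^sup>+y2. ennreal (kern b a (x1+t) (x2+t) y1 (t+y2)) * chain v ks y1 (t+y2) \<partial>lborel)"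
      by (rule shiftR) measurable
    then show ?thesis
      apply simp
      apply (rule shiftR) 
      apply measurable
      done
  qed
  also have "\<dots> = (\<integral>\<^sup>+y1. \<integral>\<^sup>+y2. ennreal (kern b a x1 x2 y1 y2) * chain v ks y1 y2 \<partial>lborel \<partial>lborel)"
    using Cons.IH[of _ _] by (intro nn_integral_cong) (simp add: kern_def algebra_simps)
  finally show ?case by (simp add: k)
qed

lemma chain_G: "chain v ks y1 y2 = chain v ks 0 (y2 - y1)"
  using chain_shift[of v ks 0 y1 "y2 - y1"] by simp

definition Zabs :: "real \<Rightarrow> real \<Rightarrow> real \<Rightarrow> (bool \<times> real) list \<Rightarrow> ennreal" where
  "Zabs u v x0 ks = (\<integral>\<^sup>+x2. ennreal (exp (- (u * (x0 - x2)))) * chain v ks x0 x2 \<partial>lborel)"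

lemma Zabs_0: "Zabs u v x0 ks = (\<integral>\<^sup>+p. ennreal (exp (u * p)) * chain v ks 0 p \<partial>lborel)"
  unfolding Zabs_def
  apply (subst shiftR[where t=x0])
   apply measurable
  apply (intro nn_integral_cong)
  apply (subst chain_G)
  apply simp
  done





lemma shiftR2:
  fixes f g :: "real \<Rightarrow> ennreal"
  assumes "f \<in> borel_measurable borel" "\<And>x. g x = f (t + x)"
  shows "(\<integral>\<^sup>+x. f x \<partial>lborel) = (\<integral>\<^sup>+x. g x \<partial>lborel)"
  using shiftR[OF assms(1), of t] assms(2) by simp

lemma reflR2:
  fixes f g :: "real \<Rightarrow> ennreal"
  assumes "f \<in> borel_measurable borel" "\<And>x. g x = f (t - x)"
  shows "(\<integral>\<^sup>+x. f x \<partial>lborel) = (\<integral>\<^sup>+x. g x \<partial>lborel)"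
  using reflR[OF assms(1), of t] assms(2) by simp
lemma start_V:
  fixes u v x0 a :: real and ks :: "(bool \<times> real) list"
  defines "G \<equiv> \<lambda>r. chain v ks 0 r"
  shows "Zabs u v x0 ((False,a)#ks) = (\<integral>\<^sup>+y. ennreal (exp (u*y) * ffun a (-y)) \<partial>lborel) *
     (\<integral>\<^sup>+r. G r * (\<integral>\<^sup>+q. ennreal (exp (u*q) * ffun a (q - r) * exp (-exp q)) \<partial>lborel) \<partial>lborel)"
proof -
  have [measurable]: "G \<in> borel_measurable borel" unfolding G_def by measurable
  have "Zabs u v x0 ((False,a)#ks) = (\<integral>\<^sup>+p. ennreal (exp (u * p)) * (\<integral>\<^sup>+y1. \<integral>\<^sup>+y2. ennreal (kern False a 0 p y1 y2) * G (y2 - y1) \<partial>lborel \<partial>lborel) \<partial>lborel)"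
  proof -
    have cg: "\<And>y1 y2. chain v ks y1 y2 = G (y2 - y1)" unfolding G_def by (rule chain_G)
    show ?thesis unfolding Zabs_0 by (simp add: cg)
  qed
  also have "\<dots> = (\<integral>\<^sup>+p. \<integral>\<^sup>+y1. \<integral>\<^sup>+y2. ennreal (exp (u * p) * ffun a (-y1) * ffun a (p - y2) * exp (-exp (p - y1))) * G (y2 - y1) \<partial>lborel \<partial>lborel \<partial>lborel)"
    apply (simp add: nn_integral_cmult[symmetric] kern_def ffun_pos less_imp_le)
    apply (intro nn_integral_cong)
    apply (simp add: ennreal_mult ffun_pos less_imp_le mult.assoc)
    done
  also have "\<dots> = (\<integral>\<^sup>+p. \<integral>\<^sup>+y1. \<integral>\<^sup>+r. ennreal (exp (u * p) * ffun a (-y1) * ffun a (p - (y1 + r)) * exp (-exp (p - y1))) * G r \<partial>lborel \<partial>lborel \<partial>lborel)"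
  proof (rule nn_integral_cong, rule nn_integral_cong)
    fix p y1 :: real
    show "(\<integral>\<^sup>+y2. ennreal (exp (u * p) * ffun a (-y1) * ffun a (p - y2) * exp (-exp (p - y1))) * G (y2 - y1) \<partial>lborel)
      = (\<integral>\<^sup>+r. ennreal (exp (u * p) * ffun a (-y1) * ffun a (p - (y1 + r)) * exp (-exp (p - y1))) * G r \<partial>lborel)"
      by (rule shiftR2[where t=y1]) auto
  qed
  also have "\<dots> = (\<integral>\<^sup>+y1. \<integral>\<^sup>+p. \<integral>\<^sup>+r. ennreal (exp (u * p) * ffun a (-y1) * ffun a (p - (y1 + r)) * exp (-exp (p - y1))) * G r \<partial>lborel \<partial>lborel \<partial>lborel)"
    by (rule swapR) measurable
  also have "\<dots> = (\<integral>\<^sup>+y1. \<integral>\<^sup>+q. \<integral>\<^sup>+r. ennreal (exp (u * (y1 + q)) * ffun a (-y1) * ffun a ((y1 + q) - (y1 + r)) * exp (-exp ((y1 + q) - y1))) * G r \<partial>lborel \<partial>lborel \<partial>lborel)"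
  proof (rule nn_integral_cong)
    fix y1 :: real
    show "(\<integral>\<^sup>+p. \<integral>\<^sup>+r. ennreal (exp (u * p) * ffun a (-y1) * ffun a (p - (y1 + r)) * exp (-exp (p - y1))) * G r \<partial>lborel \<partial>lborel)
      = (\<integral>\<^sup>+q. \<integral>\<^sup>+r. ennreal (exp (u * (y1 + q)) * ffun a (-y1) * ffun a ((y1 + q) - (y1 + r)) * exp (-exp ((y1 + q) - y1))) * G r \<partial>lborel \<partial>lborel)"
      by (rule shiftR2[where t=y1]) auto
  qed
  also have "\<dots> = (\<integral>\<^sup>+y1. \<integral>\<^sup>+q. \<integral>\<^sup>+r. ennreal (exp (u*y1) * ffun a (-y1)) * (ennreal (exp (u*q) * ffun a (q - r) * exp (-exp q)) * G r) \<partial>lborel \<partial>lborel \<partial>lborel)"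
  proof (intro nn_integral_cong)
    fix y1 q r :: real
    have e: "exp (u * (y1 + q)) = exp (u*y1) * exp (u*q)" by (simp add: distrib_left exp_add)
    have nn: "0 \<le> ffun a x" for x using ffun_pos less_imp_le by blast
    show "ennreal (exp (u * (y1 + q)) * ffun a (-y1) * ffun a ((y1 + q) - (y1 + r)) * exp (-exp ((y1 + q) - y1))) * G r
       = ennreal (exp (u*y1) * ffun a (-y1)) * (ennreal (exp (u*q) * ffun a (q - r) * exp (-exp q)) * G r)"
      unfolding e by (simp add: ennreal_mult'[symmetric] nn mult_ac)
  qed
  also have "\<dots> = (\<integral>\<^sup>+y1. ennreal (exp (u*y1) * ffun a (-y1)) * (\<integral>\<^sup>+q. \<integral>\<^sup>+r. ennreal (exp (u*q) * ffun a (q - r) * exp (-exp q)) * G r \<partial>lborel \<partial>lborel) \<partial>lborel)"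
    by (simp add: nn_integral_cmult)
  also have "\<dots> = (\<integral>\<^sup>+y. ennreal (exp (u*y) * ffun a (-y)) \<partial>lborel) * (\<integral>\<^sup>+q. \<integral>\<^sup>+r. ennreal (exp (u*q) * ffun a (q - r) * exp (-exp q)) * G r \<partial>lborel \<partial>lborel)"
    by (simp add: nn_integral_multc)
  also have "(\<integral>\<^sup>+q. \<integral>\<^sup>+r. ennreal (exp (u*q) * ffun a (q - r) * exp (-exp q)) * G r \<partial>lborel \<partial>lborel)
     = (\<integral>\<^sup>+r. \<integral>\<^sup>+q. ennreal (exp (u*q) * ffun a (q - r) * exp (-exp q)) * G r \<partial>lborel \<partial>lborel)"
    by (rule swapR) measurable
  also have "\<dots> = (\<integral>\<^sup>+r. G r * (\<integral>\<^sup>+q. ennreal (exp (u*q) * ffun a (q - r) * exp (-exp q)) \<partial>lborel) \<partial>lborel)"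
    by (subst nn_integral_cmult[symmetric]) (auto simp: mult.commute)
  finally show ?thesis .
qed

lemma start_H:
  fixes u v x0 a :: real and ks :: "(bool \<times> real) list"
  defines "G \<equiv> \<lambda>r. chain v ks 0 r"
  shows "Zabs u v x0 ((True,a)#ks) = (\<integral>\<^sup>+y. ennreal (exp (-(u*y)) * ffun a y) \<partial>lborel) *
     (\<integral>\<^sup>+r. G r * (\<integral>\<^sup>+q. ennreal (exp (u*q) * ffun a (q - r) * exp (-exp q)) \<partial>lborel) \<partial>lborel)"
proof -
  have [measurable]: "G \<in> borel_measurable borel" unfolding G_def by measurable
  have nn: "0 \<le> ffun a x" for x using ffun_pos less_imp_le by blast
  define C where "C = (\<integral>\<^sup>+y. ennreal (exp (-(u*y)) * ffun a y) \<partial>lborel)"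
  have "Zabs u v x0 ((True,a)#ks) = (\<integral>\<^sup>+p. ennreal (exp (u * p)) * (\<integral>\<^sup>+y1. \<integral>\<^sup>+y2. ennreal (kern True a 0 p y1 y2) * G (y2 - y1) \<partial>lborel \<partial>lborel) \<partial>lborel)"
  proof -
    have cg: "\<And>y1 y2. chain v ks y1 y2 = G (y2 - y1)" unfolding G_def by (rule chain_G)
    show ?thesis unfolding Zabs_0 by (simp add: cg)
  qed
  also have "\<dots> = (\<integral>\<^sup>+p. \<integral>\<^sup>+y1. \<integral>\<^sup>+y2. ennreal (exp (u * p) * ffun a y1 * ffun a (y2 - p) * exp (-exp y2)) * G (y2 - y1) \<partial>lborel \<partial>lborel \<partial>lborel)"
    apply (simp add: nn_integral_cmult[symmetric] kern_def ffun_pos less_imp_le)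
    apply (intro nn_integral_cong)
    apply (simp add: ennreal_mult ffun_pos less_imp_le mult.assoc)
    done
  also have "\<dots> = (\<integral>\<^sup>+p. \<integral>\<^sup>+y2. \<integral>\<^sup>+y1. ennreal (exp (u * p) * ffun a y1 * ffun a (y2 - p) * exp (-exp y2)) * G (y2 - y1) \<partial>lborel \<partial>lborel \<partial>lborel)"
  proof (rule nn_integral_cong)
    fix p :: real
    show "(\<integral>\<^sup>+y1. \<integral>\<^sup>+y2. ennreal (exp (u * p) * ffun a y1 * ffun a (y2 - p) * exp (-exp y2)) * G (y2 - y1) \<partial>lborel \<partial>lborel)
     = (\<integral>\<^sup>+y2. \<integral>\<^sup>+y1. ennreal (exp (u * p) * ffun a y1 * ffun a (y2 - p) * exp (-exp y2)) * G (y2 - y1) \<partial>lborel \<partial>lborel)"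
      by (rule swapR) measurable
  qed
  also have "\<dots> = (\<integral>\<^sup>+p. \<integral>\<^sup>+y2. \<integral>\<^sup>+r. ennreal (exp (u * p) * ffun a (y2 - r) * ffun a (y2 - p) * exp (-exp y2)) * G r \<partial>lborel \<partial>lborel \<partial>lborel)"
  proof (rule nn_integral_cong, rule nn_integral_cong)
    fix p y2 :: real
    show "(\<integral>\<^sup>+y1. ennreal (exp (u * p) * ffun a y1 * ffun a (y2 - p) * exp (-exp y2)) * G (y2 - y1) \<partial>lborel)
      = (\<integral>\<^sup>+r. ennreal (exp (u * p) * ffun a (y2 - r) * ffun a (y2 - p) * exp (-exp y2)) * G r \<partial>lborel)"
      by (rule reflR2[where t=y2]) auto
  qed
  also have "\<dots> = (\<integral>\<^sup>+y2. \<integral>\<^sup>+p. \<integral>\<^sup>+r. ennreal (exp (u * p) * ffun a (y2 - r) * ffun a (y2 - p) * exp (-exp y2)) * G r \<partial>lborel \<partial>lborel \<partial>lborel)"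
    by (rule swapR) measurable
  also have "\<dots> = (\<integral>\<^sup>+y2. \<integral>\<^sup>+r. \<integral>\<^sup>+p. ennreal (exp (u * p) * ffun a (y2 - p)) * (ennreal (ffun a (y2 - r) * exp (-exp y2)) * G r) \<partial>lborel \<partial>lborel \<partial>lborel)"
  proof (rule nn_integral_cong)
    fix y2 :: real
    have "(\<integral>\<^sup>+p. \<integral>\<^sup>+r. ennreal (exp (u * p) * ffun a (y2 - r) * ffun a (y2 - p) * exp (-exp y2)) * G r \<partial>lborel \<partial>lborel)
       = (\<integral>\<^sup>+r. \<integral>\<^sup>+p. ennreal (exp (u * p) * ffun a (y2 - r) * ffun a (y2 - p) * exp (-exp y2)) * G r \<partial>lborel \<partial>lborel)"
      by (rule swapR) measurable
    also have "\<dots> = (\<integral>\<^sup>+r. \<integral>\<^sup>+p. ennreal (exp (u * p) * ffun a (y2 - p)) * (ennreal (ffun a (y2 - r) * exp (-exp y2)) * G r) \<partial>lborel \<partial>lborel)"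
      by (intro nn_integral_cong) (simp add: ennreal_mult'[symmetric] nn mult_ac)
    finally show "(\<integral>\<^sup>+p. \<integral>\<^sup>+r. ennreal (exp (u * p) * ffun a (y2 - r) * ffun a (y2 - p) * exp (-exp y2)) * G r \<partial>lborel \<partial>lborel)
       = (\<integral>\<^sup>+r. \<integral>\<^sup>+p. ennreal (exp (u * p) * ffun a (y2 - p)) * (ennreal (ffun a (y2 - r) * exp (-exp y2)) * G r) \<partial>lborel \<partial>lborel)" .
  qed
  also have "\<dots> = (\<integral>\<^sup>+y2. \<integral>\<^sup>+r. (ennreal (exp (u * y2)) * C) * (ennreal (ffun a (y2 - r) * exp (-exp y2)) * G r) \<partial>lborel \<partial>lborel)"
  proof (rule nn_integral_cong, rule nn_integral_cong)
    fix y2 r :: real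
    have "(\<integral>\<^sup>+p. ennreal (exp (u * p) * ffun a (y2 - p)) \<partial>lborel) = (\<integral>\<^sup>+q. ennreal (exp (u * y2)) * ennreal (exp (-(u*q)) * ffun a q) \<partial>lborel)"
    proof (rule reflR2[where t=y2])
      fix q :: real
      have "exp (u * (y2 - q)) = exp (u * y2) * exp (-(u*q))" by (simp add: right_diff_distrib exp_diff exp_minus divide_inverse)
      then show "ennreal (exp (u * y2)) * ennreal (exp (-(u*q)) * ffun a q) = ennreal (exp (u * (y2 - q)) * ffun a (y2 - (y2 - q)))"
        by (simp add: ennreal_mult'[symmetric] nn mult_ac)
    qed measurable
    also have "\<dots> = ennreal (exp (u * y2)) * C" unfolding C_def by (simp add: nn_integral_cmult)
    finally show "(\<integral>\<^sup>+p. ennreal (exp (u * p) * ffun a (y2 - p)) * (ennreal (ffun a (y2 - r) * exp (-exp y2)) * G r) \<partial>lborel)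
       = (ennreal (exp (u * y2)) * C) * (ennreal (ffun a (y2 - r) * exp (-exp y2)) * G r)"
      by (simp add: nn_integral_multc)
  qed
  also have "\<dots> = (\<integral>\<^sup>+y2. \<integral>\<^sup>+r. C * (ennreal (exp (u * y2) * ffun a (y2 - r) * exp (-exp y2)) * G r) \<partial>lborel \<partial>lborel)"
    by (intro nn_integral_cong) (simp add: ennreal_mult'[symmetric] nn mult_ac)
  also have "\<dots> = C * (\<integral>\<^sup>+y2. \<integral>\<^sup>+r. ennreal (exp (u * y2) * ffun a (y2 - r) * exp (-exp y2)) * G r \<partial>lborel \<partial>lborel)"
    by (simp add: nn_integral_cmult)
  also have "(\<integral>\<^sup>+y2. \<integral>\<^sup>+r. ennreal (exp (u * y2) * ffun a (y2 - r) * exp (-exp y2)) * G r \<partial>lborel \<partial>lborel)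
     = (\<integral>\<^sup>+r. \<integral>\<^sup>+y2. ennreal (exp (u * y2) * ffun a (y2 - r) * exp (-exp y2)) * G r \<partial>lborel \<partial>lborel)"
    by (rule swapR) measurable
  also have "\<dots> = (\<integral>\<^sup>+r. G r * (\<integral>\<^sup>+q. ennreal (exp (u*q) * ffun a (q - r) * exp (-exp q)) \<partial>lborel) \<partial>lborel)"
    by (subst nn_integral_cmult[symmetric]) (auto simp: mult.commute)
  finally show ?thesis unfolding C_def .
qed

lemma start_move: "Zabs u v x0 ((False,a)#ks) = Zabs u v x0 ((True,a)#ks)"
proof -
  have "(\<integral>\<^sup>+y. ennreal (exp (u*y) * ffun a (-y)) \<partial>lborel) = (\<integral>\<^sup>+y. ennreal (exp (-(u*y)) * ffun a y) \<partial>lborel)"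
    by (rule reflR2[where t=0]) auto
  then show ?thesis unfolding start_V start_H by simp
qed

lemma Zabs_x0: "Zabs u v x0 ks = Zabs u v 0 ks"
  unfolding Zabs_0 ..

lemma Zabs_cong: "(\<And>x1 x2. chain v ks x1 x2 = chain v ks' x1 x2) \<Longrightarrow> Zabs u v x0 ks = Zabs u v x0 ks'"
  unfolding Zabs_def by simp

fun lab :: "nat \<Rightarrow> (nat \<Rightarrow> real) \<Rightarrow> int \<Rightarrow> int \<Rightarrow> bool list \<Rightarrow> (bool \<times> real) list" where
  "lab N a p q [] = []"
| "lab N a p q (b#s) = (if b then (True, alpha_ext N a (p+1)) # lab N a (p+1) q s
                        else (False, alpha_ext N a q) # lab N a p (q-1) s)"

lemma chain_cons_cong': "(\<And>y1 y2. chain v ks y1 y2 = chain v ks' y1 y2) \<Longrightarrow> chain v (k#ks) = chain v (k#ks')"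
  using chain_cons_cong by blast

lemma L1: "chain v (lab N a p q (True # replicate k False @ ys)) = chain v (lab N a p q (replicate k False @ True # ys))"
proof (induction k arbitrary: q)
  case 0
  then show ?case by simp
next
  case (Suc k)
  have "chain v (lab N a p q (True # replicate (Suc k) False @ ys))
     = chain v ((True, alpha_ext N a (p+1)) # (False, alpha_ext N a q) # lab N a (p+1) (q-1) (replicate k False @ ys))"
    by simp
  also have "\<dots> = chain v ((False, alpha_ext N a q) # (True, alpha_ext N a (p+1)) # lab N a (p+1) (q-1) (replicate k False @ ys))"
    using chain_swap by blast
  also have "\<dots> = chain v ((False, alpha_ext N a q) # lab N a p (q-1) (True # replicate k False @ ys))"
    by simp
  also have "\<dots> = chain v ((False, alpha_ext N a q) # lab N a p (q-1) (replicate k False @ True # ys))"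
    by (intro chain_cons_cong') (simp only: Suc.IH)
  also have "\<dots> = chain v (lab N a p q (replicate (Suc k) False @ True # ys))"
    by simp
  finally show ?case .
qed

lemma L2: "chain v (lab N a p q s) = chain v (lab N a p q (replicate (length (filter Not s)) False @ replicate (length (filter (\<lambda>x. x) s)) True))"
proof (induction s arbitrary: p q)
  case Nil
  then show ?case by simp
next
  case (Cons b s)
  show ?case
  proof (cases b)
    case True
    have "chain v (lab N a p q (b#s)) = chain v ((True, alpha_ext N a (p+1)) # lab N a (p+1) q s)"
      using True by simp
    also have "\<dots> = chain v ((True, alpha_ext N a (p+1)) # lab N a (p+1) q (replicate (length (filter Not s)) False @ replicate (length (filter (\<lambda>x. x) s)) True))"
      by (intro chain_cons_cong') (simp only: Cons.IH)
    also have "\<dots> = chain v (lab N a p q (True # replicate (length (filter Not s)) False @ replicate (length (filter (\<lambda>x. x) s)) True))"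
      by simp
    also have "\<dots> = chain v (lab N a p q (replicate (length (filter Not s)) False @ True # replicate (length (filter (\<lambda>x. x) s)) True))"
      by (rule L1)
    finally show ?thesis using True by simp
  next
    case False
    have "chain v (lab N a p q (b#s)) = chain v ((False, alpha_ext N a q) # lab N a p (q-1) s)"
      using False by simp
    also have "\<dots> = chain v ((False, alpha_ext N a q) # lab N a p (q-1) (replicate (length (filter Not s)) False @ replicate (length (filter (\<lambda>x. x) s)) True))"
      by (intro chain_cons_cong') (simp only: Cons.IH)
    finally show ?thesis using False by simp
  qed
qed

lemma L3: "Zabs u v x0 (lab N a m m (False#s)) = Zabs u v x0 (lab N a (m-1) (m-1) (True#s))"
  using start_move[of u v x0 "alpha_ext N a m" "lab N a m (m-1) s"] by simp

lemma lab_snoc: "lab N a p q (xs @ [b]) = lab N a p q xs @ [(b, if b then alpha_ext N a (p + int (length (filter id xs)) + 1)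
     else alpha_ext N a (q - int (length (filter Not xs))))]"
  by (induction xs arbitrary: p q) (auto simp: algebra_simps)

lemma chain_end_gen: "chain v (ks @ [(True,a)]) = chain v (ks @ [(False,a)])"
  using chain_end by blast

lemma alpha_per: "alpha_ext N a (n + int N) = alpha_ext N a n"
proof -
  have "n + int N - 1 = (n - 1) + int N" by simp
  then have "(n + int N - 1) mod int N = (n - 1) mod int N" by (simp only: mod_add_self2)
  then show ?thesis unfolding alpha_ext_def by simp
qed

lemma replicate_snoc: "replicate (Suc n) x = replicate n x @ [x]"
  by (simp add: replicate_append_same)

theorem path_indep:
  assumes N: "N \<ge> 1" and m0: "m0 \<ge> 0" and len: "length s = N" and vm: "int (length (filter Not s)) \<le> m0"
  shows "Zabs u v x0 (lab N a m0 m0 s) = Zabs u v 0 (lab N a 0 0 (replicate N True))"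
proof -
  have B: "\<And>m h. int k \<le> m \<Longrightarrow> Zabs u v 0 (lab N a m m (replicate k False @ replicate h True))
       = Zabs u v 0 (lab N a (m - int k) (m - int k) (replicate (k + h) True))" for k
  proof (induction k)
    case 0
    then show ?case by simp
  next
    case (Suc k)
    have "Zabs u v 0 (lab N a m m (replicate (Suc k) False @ replicate h True))
       = Zabs u v 0 (lab N a (m-1) (m-1) (True # replicate k False @ replicate h True))"
      using L3 by simp
    also have "\<dots> = Zabs u v 0 (lab N a (m-1) (m-1) (replicate k False @ True # replicate h True))"
      by (rule Zabs_cong) (simp only: L1)
    also have "\<dots> = Zabs u v 0 (lab N a (m-1) (m-1) (replicate k False @ replicate (Suc h) True))"
      by simp
    also have "\<dots> = Zabs u v 0 (lab N a (m - 1 - int k) (m - 1 - int k) (replicate (k + Suc h) True))"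
      using Suc.prems by (intro Suc.IH) simp
    finally show ?case by (simp add: algebra_simps)
  qed
  have C: "Zabs u v 0 (lab N a (int c) (int c) (replicate N True)) = Zabs u v 0 (lab N a 0 0 (replicate N True))" for c
  proof (induction c)
    case 0
    then show ?case by simp
  next
    case (Suc c)
    obtain n where n: "N = Suc n" using N by (cases N) auto
    let ?m = "int (Suc c)"
    have "Zabs u v 0 (lab N a ?m ?m (replicate N True)) = Zabs u v 0 (lab N a ?m ?m (replicate n True @ [True]))"
      unfolding n replicate_snoc ..
    also have "\<dots> = Zabs u v 0 (lab N a ?m ?m (replicate n True @ [False]))"
    proof (rule Zabs_cong)
      fix x1 x2
      have "alpha_ext N a (?m + int n + 1) = alpha_ext N a ?m"
        using alpha_per[of N a ?m] n by (simp add: algebra_simps)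
      then show "chain v (lab N a ?m ?m (replicate n True @ [True])) x1 x2 = chain v (lab N a ?m ?m (replicate n True @ [False])) x1 x2"
        unfolding lab_snoc by (simp add: chain_end_gen)
    qed
    also have "\<dots> = Zabs u v 0 (lab N a ?m ?m (False # replicate n True))"
      by (rule Zabs_cong) (subst L2, subst (2) L2, simp)
    also have "\<dots> = Zabs u v 0 (lab N a (int c) (int c) (True # replicate n True))"
      using L3[of u v 0 N a ?m "replicate n True"] by simp
    also have "\<dots> = Zabs u v 0 (lab N a (int c) (int c) (replicate N True))"
      using n by simp
    finally show ?case using Suc.IH by simp
  qed
  let ?v = "length (filter Not s)" and ?h = "length (filter (\<lambda>x. x) s)"
  have vh: "?v + ?h = N" using len sum_length_filter_compl[of "\<lambda>x. x" s] by simp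
  have "Zabs u v x0 (lab N a m0 m0 s) = Zabs u v 0 (lab N a m0 m0 s)" by (rule Zabs_x0)
  also have "\<dots> = Zabs u v 0 (lab N a m0 m0 (replicate ?v False @ replicate ?h True))"
    by (rule Zabs_cong) (subst L2, simp)
  also have "\<dots> = Zabs u v 0 (lab N a (m0 - int ?v) (m0 - int ?v) (replicate N True))"
    using B[OF vm] vh by simp
  also have "\<dots> = Zabs u v 0 (lab N a 0 0 (replicate N True))"
    using C[of "nat (m0 - int ?v)"] vm by simp
  finally show ?thesis .
qed

lemma expexp_bound: assumes "(t::real) \<ge> 0" shows "- exp z \<le> t * ln t - t - t * z"
proof (cases "t = 0")
  case True then show ?thesis by simp
next
  case False
  with assms have t: "t > 0" by simp
  have "1 + (z - ln t) \<le> exp (z - ln t)" by (rule exp_ge_add_one_self)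
  also have "\<dots> = exp z / t" using t by (simp add: exp_diff)
  finally have "t * (1 + (z - ln t)) \<le> exp z" using t by (simp add: field_simps)
  then show ?thesis by (simp add: algebra_simps)
qed

definition J :: "real \<Rightarrow> ennreal" where
  "J \<theta> = (\<integral>\<^sup>+r. ennreal (ffun \<theta> r) \<partial>lborel)"

lemma J_shift: "(\<integral>\<^sup>+y. ennreal (ffun b (y - x) * exp (w*y)) \<partial>lborel) = ennreal (exp (w*x)) * J (b - w)"
proof -
  have "(\<integral>\<^sup>+y. ennreal (ffun b (y - x) * exp (w*y)) \<partial>lborel) = (\<integral>\<^sup>+r. ennreal (exp (w*x)) * ennreal (ffun (b - w) r) \<partial>lborel)"
  proof (rule shiftR2[where t=x])
    fix r
    have "ffun b (x + r - x) * exp (w * (x + r)) = exp (w*x) * ffun (b - w) r"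
      unfolding ffun_def by (simp add: mult_exp_exp algebra_simps)
    then show "ennreal (exp (w*x)) * ennreal (ffun (b - w) r) = ennreal (ffun b (x + r - x) * exp (w * (x + r)))"
      by (simp add: ennreal_mult'[symmetric])
  qed measurable
  also have "\<dots> = ennreal (exp (w*x)) * J (b - w)" unfolding J_def by (simp add: nn_integral_cmult)
  finally show ?thesis .
qed

lemma exp_half_fin: assumes "l > 0" shows "(\<integral>\<^sup>+x. ennreal (exp (-l*x)) * indicator {0..} x \<partial>lborel) < \<infinity>"
  using nn_integral_has_integral_lebesgue'[OF _ has_integral_exp_minus_to_infinity[OF assms, of 0]] by simp

lemma J_fin: assumes "\<theta> > 0" shows "J \<theta> < \<infinity>"
proof -
  define t where "t = \<theta> + 1"
  define D where "D = exp (t * ln t - t)"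
  have t: "t \<ge> 0" using assms unfolding t_def by simp
  have bound: "ennreal (ffun \<theta> r) \<le> ennreal (exp (-\<theta>*r)) * indicator {0..} r + ennreal D * (ennreal (exp (-1*(-r))) * indicator {0..} (-r))" for r
  proof (cases "r \<ge> 0")
    case True
    then have "ffun \<theta> r \<le> exp (-\<theta>*r)" unfolding ffun_def by simp
    then have "ennreal (ffun \<theta> r) \<le> ennreal (exp (-\<theta>*r)) * indicator {0..} r" using True by (simp add: ennreal_leI)
    then show ?thesis by (rule order_trans) simp
  next
    case False
    have "- exp (-r) \<le> t * ln t - t - t * (-r)" by (rule expexp_bound[OF t])
    then have "-\<theta>*r - exp (-r) \<le> (t * ln t - t) + r" unfolding t_def by (simp add: algebra_simps)
    then have "ffun \<theta> r \<le> D * exp (-1*(-r))" unfolding ffun_def D_def by (simp add: mult_exp_exp)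
    then have "ennreal (ffun \<theta> r) \<le> ennreal D * ennreal (exp (-1*(-r)))" by (simp add: ennreal_mult'[symmetric] D_def ennreal_leI)
    then show ?thesis using False by simp
  qed
  have "J \<theta> \<le> (\<integral>\<^sup>+r. ennreal (exp (-\<theta>*r)) * indicator {0..} r + ennreal D * (ennreal (exp (-1*(-r))) * indicator {0..} (-r)) \<partial>lborel)"
    unfolding J_def by (intro nn_integral_mono bound)
  also have "\<dots> = (\<integral>\<^sup>+r. ennreal (exp (-\<theta>*r)) * indicator {0..} r \<partial>lborel) + ennreal D * (\<integral>\<^sup>+r. ennreal (exp (-1*(-r))) * indicator {0..} (-r) \<partial>lborel)"
    by (subst nn_integral_add) (auto simp: nn_integral_cmult)
  also have "(\<integral>\<^sup>+r. ennreal (exp (-1*(-r))) * indicator {0..} (-r) \<partial>lborel) = (\<integral>\<^sup>+r. ennreal (exp (-1*r)) * indicator {0..} r \<partial>lborel)"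
    by (rule reflR2[where t=0, symmetric]) auto
  also have "(\<integral>\<^sup>+r. ennreal (exp (-\<theta>*r)) * indicator {0..} r \<partial>lborel) + ennreal D * (\<integral>\<^sup>+r. ennreal (exp (-1*r)) * indicator {0..} r \<partial>lborel) < \<infinity>"
    using exp_half_fin[OF assms] exp_half_fin[of 1] by (simp add: ennreal_mult_less_top)
  finally show ?thesis .
qed

lemma step_bound:
  assumes t: "t \<ge> 0" and H: "\<And>y1 y2. chain v ks y1 y2 \<le> C * ennreal (exp (-(q*(y1-y2))))"
  shows "chain v ((True,b)#ks) x1 x2 \<le> C * ennreal (exp (t * ln t - t)) * J (b+q) * J (b-q+t) * ennreal (exp (-((q-t)*(x1-x2))))"
proof -
  define D where "D = exp (t * ln t - t)"
  define K where "K = C * ennreal (D * exp (t*x1))"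
  have nn: "0 \<le> ffun a x" for a x using ffun_pos less_imp_le by blast
  have pt: "ennreal (kern True b x1 x2 y1 y2) * chain v ks y1 y2 \<le> K * (ennreal (ffun b (y1-x1) * exp (-q*y1)) * ennreal (ffun b (y2-x2) * exp ((q-t)*y2)))" for y1 y2
  proof -
    have "- exp (y2 - x1) \<le> t * ln t - t - t * (y2 - x1)" by (rule expexp_bound[OF t])
    then have "exp (- exp (-(x1-y2))) \<le> D * exp (-t*(y2-x1))" unfolding D_def by (simp add: mult_exp_exp)
    then have k: "kern True b x1 x2 y1 y2 \<le> ffun b (y1-x1) * ffun b (y2-x2) * (D * exp (-t*(y2-x1)))"
      unfolding kern_def by (simp add: mult_left_mono nn)
    have "ennreal (kern True b x1 x2 y1 y2) * chain v ks y1 y2 \<le> ennreal (ffun b (y1-x1) * ffun b (y2-x2) * (D * exp (-t*(y2-x1)))) * (C * ennreal (exp (-(q*(y1-y2)))))"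
      by (intro mult_mono ennreal_leI k H) auto
    also have "\<dots> = K * (ennreal (ffun b (y1-x1) * exp (-q*y1)) * ennreal (ffun b (y2-x2) * exp ((q-t)*y2)))"
    proof -
      define P where "P = ffun b (y1-x1) * ffun b (y2-x2) * (D * exp (-t*(y2-x1)))"
      define E where "E = exp (-(q*(y1-y2)))"
      define A1 where "A1 = ffun b (y1-x1) * exp (-q*y1)"
      define A2 where "A2 = ffun b (y2-x2) * exp ((q-t)*y2)"
      have P0: "P \<ge> 0" unfolding P_def D_def by (simp add: nn)
      have E0: "E \<ge> 0" unfolding E_def by simp
      have A0: "A1 \<ge> 0" "A2 \<ge> 0" unfolding A1_def A2_def by (simp_all add: nn)
      have D0: "D * exp (t*x1) \<ge> 0" unfolding D_def by simp
      have eq: "P * E = (D * exp (t*x1)) * (A1 * A2)"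
      proof -
        have X: "exp (-t*(y2-x1)) * exp (-(q*(y1-y2))) = exp (t*x1) * (exp (-q*y1) * exp ((q-t)*y2))"
          by (simp add: mult_exp_exp algebra_simps)
        have "P * E = (ffun b (y1-x1) * ffun b (y2-x2) * D) * (exp (-t*(y2-x1)) * exp (-(q*(y1-y2))))"
          unfolding P_def E_def by (simp only: mult_ac)
        also have "\<dots> = (ffun b (y1-x1) * ffun b (y2-x2) * D) * (exp (t*x1) * (exp (-q*y1) * exp ((q-t)*y2)))"
          unfolding X ..
        also have "\<dots> = (D * exp (t*x1)) * (A1 * A2)"
          unfolding A1_def A2_def by (simp only: mult_ac)
        finally show ?thesis .
      qed
      have "ennreal P * (C * ennreal E) = C * ennreal (P * E)"
        using P0 E0 by (simp add: ennreal_mult mult_ac)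
      also have "\<dots> = C * (ennreal (D * exp (t*x1)) * ennreal (A1 * A2))"
        unfolding eq using D0 by (simp add: ennreal_mult')
      also have "\<dots> = K * (ennreal A1 * ennreal A2)"
        unfolding K_def using A0 by (simp add: ennreal_mult' mult_ac)
      finally show ?thesis unfolding P_def E_def A1_def A2_def .
    qed
    finally show ?thesis .
  qed
  have "chain v ((True,b)#ks) x1 x2 \<le> (\<integral>\<^sup>+y1. \<integral>\<^sup>+y2. K * (ennreal (ffun b (y1-x1) * exp (-q*y1)) * ennreal (ffun b (y2-x2) * exp ((q-t)*y2))) \<partial>lborel \<partial>lborel)"
    by (simp only: chain.simps) (intro nn_integral_mono pt)
  also have "\<dots> = K * (\<integral>\<^sup>+y1. \<integral>\<^sup>+y2. ennreal (ffun b (y1-x1) * exp (-q*y1)) * ennreal (ffun b (y2-x2) * exp ((q-t)*y2)) \<partial>lborel \<partial>lborel)"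
    by (simp add: nn_integral_cmult)
  also have "\<dots> = K * ((\<integral>\<^sup>+y1. ennreal (ffun b (y1-x1) * exp (-q*y1)) \<partial>lborel) * (\<integral>\<^sup>+y2. ennreal (ffun b (y2-x2) * exp ((q-t)*y2)) \<partial>lborel))"
    by (subst iter_prod) auto
  also have "\<dots> = K * ((ennreal (exp (-q*x1)) * J (b - -q)) * (ennreal (exp ((q-t)*x2)) * J (b - (q-t))))"
    unfolding J_shift ..
  also have "\<dots> = C * ennreal (D * exp (t*x1) * exp (-q*x1) * exp ((q-t)*x2)) * J (b+q) * J (b-q+t)"
  proof -
    have "b - (q - t) = b - q + t" by simp
    then show ?thesis unfolding K_def by (simp only:) (simp add: ennreal_mult'[symmetric] D_def mult_ac del: diff_diff_eq2)
  qed
  also have "D * exp (t*x1) * exp (-q*x1) * exp ((q-t)*x2) = D * exp (-((q-t)*(x1-x2)))"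
    by (simp add: mult_exp_exp algebra_simps)
  finally show ?thesis unfolding D_def by (simp add: ennreal_mult'[symmetric] mult_ac)
qed

lemma J_shift0: "(\<integral>\<^sup>+y. ennreal (ffun b y * exp (w*y)) \<partial>lborel) = J (b - w)"
  using J_shift[of b 0 w] by simp

lemma final_bound:
  assumes H: "\<And>y1 y2. chain v ks y1 y2 \<le> C * ennreal (exp (-(q*(y1-y2))))"
  shows "Zabs u v x0 ((True,b)#ks) \<le> C * J (b+q) * J (b+u) * J (q+u)"
proof -
  have nn: "0 \<le> ffun a x" for a x using ffun_pos less_imp_le by blast
  have pt: "chain v ((True,b)#ks) 0 p \<le> C * J (b+q) * (\<integral>\<^sup>+y2. ennreal (ffun b (y2-p) * exp (q*y2 - exp y2)) \<partial>lborel)" for p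
  proof -
    have "chain v ((True,b)#ks) 0 p \<le> (\<integral>\<^sup>+y1. \<integral>\<^sup>+y2. C * (ennreal (ffun b y1 * exp (-q*y1)) * ennreal (ffun b (y2-p) * exp (q*y2 - exp y2))) \<partial>lborel \<partial>lborel)"
    proof (simp only: chain.simps, intro nn_integral_mono)
      fix y1 y2 :: real
      have "ennreal (kern True b 0 p y1 y2) * chain v ks y1 y2 \<le> ennreal (kern True b 0 p y1 y2) * (C * ennreal (exp (-(q*(y1-y2)))))"
        by (intro mult_left_mono H) auto
      also have "\<dots> = C * ennreal (kern True b 0 p y1 y2 * exp (-(q*(y1-y2))))"
        by (simp add: ennreal_mult kern_nonneg mult_ac)
      also have "kern True b 0 p y1 y2 * exp (-(q*(y1-y2))) = (ffun b y1 * exp (-q*y1)) * (ffun b (y2-p) * exp (q*y2 - exp y2))"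
      proof -
        have "exp (- exp (- (0 - y2))) * exp (-(q*(y1-y2))) = exp (-q*y1) * exp (q*y2 - exp y2)"
          by (simp add: mult_exp_exp algebra_simps)
        then show ?thesis unfolding kern_def by (simp add: mult_ac)
      qed
      also have "C * ennreal ((ffun b y1 * exp (-q*y1)) * (ffun b (y2-p) * exp (q*y2 - exp y2)))
          = C * (ennreal (ffun b y1 * exp (-q*y1)) * ennreal (ffun b (y2-p) * exp (q*y2 - exp y2)))"
        by (simp add: ennreal_mult nn)
      finally show "ennreal (kern True b 0 p y1 y2) * chain v ks y1 y2 \<le> C * (ennreal (ffun b y1 * exp (-q*y1)) * ennreal (ffun b (y2-p) * exp (q*y2 - exp y2)))" .
    qed
    also have "\<dots> = C * ((\<integral>\<^sup>+y1. ennreal (ffun b y1 * exp (-q*y1)) \<partial>lborel) * (\<integral>\<^sup>+y2. ennreal (ffun b (y2-p) * exp (q*y2 - exp y2)) \<partial>lborel))"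
    proof -
      have "(\<integral>\<^sup>+y1. \<integral>\<^sup>+y2. C * (ennreal (ffun b y1 * exp (-q*y1)) * ennreal (ffun b (y2-p) * exp (q*y2 - exp y2))) \<partial>lborel \<partial>lborel)
        = C * (\<integral>\<^sup>+y1. \<integral>\<^sup>+y2. ennreal (ffun b y1 * exp (-q*y1)) * ennreal (ffun b (y2-p) * exp (q*y2 - exp y2)) \<partial>lborel \<partial>lborel)"
        by (simp add: nn_integral_cmult)
      also have "\<dots> = C * ((\<integral>\<^sup>+y1. ennreal (ffun b y1 * exp (-q*y1)) \<partial>lborel) * (\<integral>\<^sup>+y2. ennreal (ffun b (y2-p) * exp (q*y2 - exp y2)) \<partial>lborel))"
        by (subst iter_prod) auto
      finally show ?thesis .
    qed
    also have "\<dots> = C * J (b+q) * (\<integral>\<^sup>+y2. ennreal (ffun b (y2-p) * exp (q*y2 - exp y2)) \<partial>lborel)"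
      using J_shift0[of b "-q"] by (simp add: mult_ac)
    finally show ?thesis .
  qed
  have "Zabs u v x0 ((True,b)#ks) = (\<integral>\<^sup>+p. ennreal (exp (u * p)) * chain v ((True,b)#ks) 0 p \<partial>lborel)"
    by (rule Zabs_0)
  also have "\<dots> \<le> (\<integral>\<^sup>+p. ennreal (exp (u * p)) * (C * J (b+q) * (\<integral>\<^sup>+y2. ennreal (ffun b (y2-p) * exp (q*y2 - exp y2)) \<partial>lborel)) \<partial>lborel)"
    by (intro nn_integral_mono mult_left_mono pt) auto
  also have "\<dots> = C * J (b+q) * (\<integral>\<^sup>+p. \<integral>\<^sup>+y2. ennreal (exp (u * p)) * ennreal (ffun b (y2-p) * exp (q*y2 - exp y2)) \<partial>lborel \<partial>lborel)"
    by (subst nn_integral_cmult[symmetric], measurable) (simp add: nn_integral_cmult mult_ac)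
  also have "(\<integral>\<^sup>+p. \<integral>\<^sup>+y2. ennreal (exp (u * p)) * ennreal (ffun b (y2-p) * exp (q*y2 - exp y2)) \<partial>lborel \<partial>lborel)
     = (\<integral>\<^sup>+y2. \<integral>\<^sup>+p. ennreal (exp (u * p)) * ennreal (ffun b (y2-p) * exp (q*y2 - exp y2)) \<partial>lborel \<partial>lborel)"
    by (rule swapR) measurable
  also have "\<dots> = (\<integral>\<^sup>+y2. ennreal (exp ((q+u)*y2 - exp y2)) * J (b+u) \<partial>lborel)"
  proof (rule nn_integral_cong)
    fix y2 :: real
    have "(\<integral>\<^sup>+p. ennreal (exp (u * p)) * ennreal (ffun b (y2-p) * exp (q*y2 - exp y2)) \<partial>lborel)
       = (\<integral>\<^sup>+r. ennreal (exp ((q+u)*y2 - exp y2)) * ennreal (ffun b r * exp ((-u)*r)) \<partial>lborel)"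
    proof (rule reflR2[where t=y2])
      fix r
      have "exp (u * (y2 - r)) * (ffun b (y2 - (y2 - r)) * exp (q*y2 - exp y2)) = exp ((q+u)*y2 - exp y2) * (ffun b r * exp ((-u)*r))"
      proof -
        have X: "exp (u * (y2 - r)) * exp (q*y2 - exp y2) = exp ((q+u)*y2 - exp y2) * exp ((-u)*r)"
          by (simp add: mult_exp_exp algebra_simps)
        have "exp (u * (y2 - r)) * (ffun b (y2 - (y2 - r)) * exp (q*y2 - exp y2)) = ffun b r * (exp (u * (y2 - r)) * exp (q*y2 - exp y2))"
          by (simp add: mult_ac)
        also have "\<dots> = ffun b r * (exp ((q+u)*y2 - exp y2) * exp ((-u)*r))" unfolding X ..
        also have "\<dots> = exp ((q+u)*y2 - exp y2) * (ffun b r * exp ((-u)*r))" by (simp only: mult_ac)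
        finally show ?thesis .
      qed
      then have E: "ennreal (exp (u * (y2 - r)) * (ffun b (y2 - (y2 - r)) * exp (q*y2 - exp y2))) = ennreal (exp ((q+u)*y2 - exp y2) * (ffun b r * exp ((-u)*r)))"
        by (rule arg_cong)
      have "ennreal (exp ((q+u)*y2 - exp y2)) * ennreal (ffun b r * exp ((-u)*r)) = ennreal (exp ((q+u)*y2 - exp y2) * (ffun b r * exp ((-u)*r)))"
        by (simp add: ennreal_mult nn)
      also have "\<dots> = ennreal (exp (u * (y2 - r)) * (ffun b (y2 - (y2 - r)) * exp (q*y2 - exp y2)))" using E by simp
      also have "\<dots> = ennreal (exp (u * (y2 - r))) * ennreal (ffun b (y2 - (y2 - r)) * exp (q*y2 - exp y2))"
        by (simp add: ennreal_mult nn)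
      finally show "ennreal (exp ((q+u)*y2 - exp y2)) * ennreal (ffun b r * exp ((-u)*r)) = ennreal (exp (u * (y2 - r))) * ennreal (ffun b (y2 - (y2 - r)) * exp (q*y2 - exp y2))" .
    qed measurable
    also have "\<dots> = ennreal (exp ((q+u)*y2 - exp y2)) * J (b+u)"
      using J_shift0[of b "-u"] by (simp add: nn_integral_cmult)
    finally show "(\<integral>\<^sup>+p. ennreal (exp (u * p)) * ennreal (ffun b (y2-p) * exp (q*y2 - exp y2)) \<partial>lborel) = ennreal (exp ((q+u)*y2 - exp y2)) * J (b+u)" .
  qed
  also have "\<dots> = (\<integral>\<^sup>+y2. ennreal (exp ((q+u)*y2 - exp y2)) \<partial>lborel) * J (b+u)"
    by (simp add: nn_integral_multc)
  also have "(\<integral>\<^sup>+y2. ennreal (exp ((q+u)*y2 - exp y2)) \<partial>lborel) = J (q+u)"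
    unfolding J_def
  proof (rule reflR2[where t=0])
    fix y show "ennreal (ffun (q + u) y) = ennreal (exp ((q + u) * (0 - y) - exp (0 - y)))"
      unfolding ffun_def by (simp add: algebra_simps)
  qed measurable
  finally show ?thesis by (simp add: mult_ac)
qed

lemma mid_bound:
  assumes "\<forall>i\<in>{1..n}. alpha_ext N a (p + int i) + q' > 0 \<and> alpha_ext N a (p + int i) - q' > 0"
    and "C < \<infinity>" and "\<And>y1 y2. chain v tl0 y1 y2 \<le> C * ennreal (exp (-(q'*(y1-y2))))"
  shows "\<exists>C'. C' < \<infinity> \<and> (\<forall>y1 y2. chain v (lab N a p q (replicate n True) @ tl0) y1 y2 \<le> C' * ennreal (exp (-(q'*(y1-y2)))))"
  using assms(1)
proof (induction n arbitrary: p)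
  case 0
  then show ?case using assms(2,3) by auto
next
  case (Suc n)
  have "\<forall>i\<in>{1..n}. alpha_ext N a (p + 1 + int i) + q' > 0 \<and> alpha_ext N a (p + 1 + int i) - q' > 0"
  proof
    fix i assume "i \<in> {1..n}"
    then have "Suc i \<in> {1..Suc n}" by simp
    then have "alpha_ext N a (p + int (Suc i)) + q' > 0 \<and> alpha_ext N a (p + int (Suc i)) - q' > 0"
      using Suc.prems by blast
    moreover have "p + int (Suc i) = p + 1 + int i" by simp
    ultimately show "alpha_ext N a (p + 1 + int i) + q' > 0 \<and> alpha_ext N a (p + 1 + int i) - q' > 0"
      by metis
  qed
  then obtain C' where C': "C' < \<infinity>" "\<And>y1 y2. chain v (lab N a (p+1) q (replicate n True) @ tl0) y1 y2 \<le> C' * ennreal (exp (-(q'*(y1-y2))))"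
    using Suc.IH by blast
  define b where "b = alpha_ext N a (p + 1)"
  have b: "b + q' > 0" "b - q' > 0" using Suc.prems unfolding b_def by (auto dest: bspec[of _ _ 1])
  have "\<And>y1 y2. chain v ((True,b) # (lab N a (p+1) q (replicate n True) @ tl0)) y1 y2
     \<le> C' * ennreal (exp (0 * ln 0 - 0)) * J (b+q') * J (b-q'+0) * ennreal (exp (-((q'-0)*(y1-y2))))"
    by (rule step_bound) (auto intro: C')
  moreover have "C' * ennreal (exp (0 * ln 0 - 0)) * J (b+q') * J (b-q'+0) < \<infinity>"
    using C' J_fin b by (simp add: ennreal_mult_less_top)
  ultimately show ?case unfolding b_def by (intro exI[of _ "C' * ennreal (exp (0 * ln 0 - 0)) * J (b+q') * J (b-q'+0)"]) (simp add: b_def)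
qed

lemma alpha_in: "1 \<le> j \<Longrightarrow> j \<le> int N \<Longrightarrow> alpha_ext N a j = a (nat j)"
  unfolding alpha_ext_def by (simp add: Suc_nat_eq_nat_zadd1)

lemma Max_less_Min: "finite A \<Longrightarrow> A \<noteq> {} \<Longrightarrow> finite B \<Longrightarrow> B \<noteq> {} \<Longrightarrow> (\<forall>x\<in>A. \<forall>y\<in>B. x < (y::real)) \<Longrightarrow> Max A < Min B"
  by (metis Max_in Min_in)

theorem canonical_finite:
  assumes N: "N \<ge> 1"
    and aa: "\<forall>i\<in>{1..N}. \<forall>j\<in>{1..N}. a i + a j > 0"
    and au: "\<forall>i\<in>{1..N}. a i + u > 0"
    and av: "\<forall>i\<in>{1..N}. a i + v > 0"
    and uv: "u + v > 0"
  shows "Zabs u v 0 (lab N a 0 0 (replicate N True)) < \<infinity>"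
proof (cases "N = 1")
  case True
  have "Zabs u v 0 ((True, a 1) # []) \<le> 1 * J (a 1 + v) * J (a 1 + u) * J (v + u)"
    by (rule final_bound) simp
  also have "\<dots> < \<infinity>" using J_fin au av uv True by (simp add: ennreal_mult_less_top add.commute)
  finally show ?thesis using True by (simp add: alpha_ext_def)
next
  case False
  with N have N2: "N \<ge> 2" by simp
  define A where "A = insert 0 ((\<lambda>k. v - a k) ` {1..N})"
  define B where "B = insert (u+v) ((\<lambda>k. a k + v) ` {1..N})"
  have "Max A < Min B"
  proof (rule Max_less_Min)
    show "\<forall>x\<in>A. \<forall>y\<in>B. x < y"
    proof (intro ballI)
      fix x y assume x: "x \<in> A" and y: "y \<in> B"
      show "x < y"
      proof (cases "x = 0")
        case True
        then show ?thesis using y au av uv by (auto simp: B_def)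
      next
        case False
        then obtain k where k: "k \<in> {1..N}" "x = v - a k" using x by (auto simp: A_def)
        show ?thesis
        proof (cases "y = u + v")
          case True
          have "a k + u > 0" using k au by blast
          then show ?thesis using k True by simp
        next
          case False
          then obtain j where j: "j \<in> {1..N}" "y = a j + v" using y by (auto simp: B_def)
          then show ?thesis using k aa by force
        qed
      qed
    qed
  qed (auto simp: A_def B_def)
  define t where "t = (Max A + Min B) / 2"
  have tA: "x < t" if "x \<in> A" for x
  proof -
    have "x \<le> Max A" using that by (simp add: A_def)
    then show ?thesis using \<open>Max A < Min B\<close> unfolding t_def by simp
  qed
  have tB: "t < y" if "y \<in> B" for y
  proof -
    have "Min B \<le> y" using that by (simp add: B_def)
    then show ?thesis using \<open>Max A < Min B\<close> unfolding t_def by simp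
  qed
  have t0: "t \<ge> 0" using tA[of 0] by (simp add: A_def)
  have t1: "v - a k < t" "t < a k + v" if "k \<in> {1..N}" for k
    using tA[of "v - a k"] tB[of "a k + v"] that by (auto simp: A_def B_def)
  have t2: "t < u + v" using tB by (simp add: B_def)
  define q where "q = v - t"
  obtain n where n: "N = Suc (Suc n)" using N2 by (metis add_2_eq_Suc le_Suc_ex)
  have rep: "replicate N True = True # (replicate n True @ [True])"
    unfolding n by (simp add: replicate_append_same)
  have lab_eq: "lab N a 0 0 (replicate N True) = (True, a 1) # (lab N a 1 0 (replicate n True) @ [(True, a N)])"
  proof -
    have "nat (1 + int n + 1) = N" using n by simp
    then have "alpha_ext N a (1 + int n + 1) = a N" using alpha_in[of "1 + int n + 1" N a] n by simp
    moreover have "alpha_ext N a 1 = a 1" using alpha_in[of 1 N a] N by simp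
    ultimately show ?thesis unfolding rep by (simp add: lab_snoc)
  qed
  have aN: "a N - v + t > 0" "a N + v > 0" using t1[of N] av N by auto
  have last: "chain v [(True, a N)] y1 y2 \<le> 1 * ennreal (exp (t * ln t - t)) * J (a N + v) * J (a N - v + t) * ennreal (exp (-((v-t)*(y1-y2))))" for y1 y2
    by (rule step_bound[OF t0]) simp
  have lastC: "1 * ennreal (exp (t * ln t - t)) * J (a N + v) * J (a N - v + t) < \<infinity>"
    using J_fin aN by (simp add: ennreal_mult_less_top)
  have midc: "\<forall>i\<in>{1..n}. alpha_ext N a (1 + int i) + q > 0 \<and> alpha_ext N a (1 + int i) - q > 0"
  proof
    fix i assume i: "i \<in> {1..n}"
    then have k: "Suc i \<in> {1..N}" using n by auto
    have "nat (1 + int i) = Suc i" by simp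
    then have "alpha_ext N a (1 + int i) = a (Suc i)" using alpha_in[of "1 + int i" N a] i n by auto
    then show "alpha_ext N a (1 + int i) + q > 0 \<and> alpha_ext N a (1 + int i) - q > 0"
      using t1[OF k] unfolding q_def by simp
  qed
  obtain C' where C': "C' < \<infinity>" "\<And>y1 y2. chain v (lab N a 1 0 (replicate n True) @ [(True, a N)]) y1 y2 \<le> C' * ennreal (exp (-(q*(y1-y2))))"
    using mid_bound[OF midc lastC, of v "[(True, a N)]" 0] last unfolding q_def by blast
  have "Zabs u v 0 ((True, a 1) # (lab N a 1 0 (replicate n True) @ [(True, a N)])) \<le> C' * J (a 1 + q) * J (a 1 + u) * J (q + u)"
    by (rule final_bound) (rule C'(2))
  also have "\<dots> < \<infinity>"
  proof -
    have "a 1 + q > 0" using t1[of 1] N unfolding q_def by simp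
    moreover have "a 1 + u > 0" using au N by simp
    moreover have "q + u > 0" using t2 unfolding q_def by simp
    ultimately show ?thesis using C' J_fin by (simp add: ennreal_mult_less_top)
  qed
  finally show ?thesis unfolding lab_eq .
qed

interpretation PS: product_sigma_finite "\<lambda>_::nat\<times>nat. lborel :: real measure"
  by standard

definition mrg :: "(nat \<times> nat) set \<Rightarrow> (nat \<times> nat \<Rightarrow> real) \<Rightarrow> (nat \<times> nat \<Rightarrow> real) \<Rightarrow> nat \<times> nat \<Rightarrow> real" where
  "mrg U lam \<mu> = (\<lambda>i. if i \<in> U then \<mu> i else lam i)"

lemma mrg_meas[measurable]: "(\<lambda>\<mu>. mrg U lam \<mu> i) \<in> borel_measurable (PiM U (\<lambda>_. lborel))"
proof (cases "i \<in> U")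
  case True
  then show ?thesis unfolding mrg_def by simp
next
  case False
  then show ?thesis unfolding mrg_def by simp
qed

definition Wt :: "nat \<Rightarrow> real \<Rightarrow> (bool \<times> real) list \<Rightarrow> nat \<Rightarrow> (nat \<times> nat \<Rightarrow> real) \<Rightarrow> ennreal" where
  "Wt N v kl k lam = (\<Prod>j\<in>{Suc k..N}. ennreal (kern (fst (kl!(j-1))) (snd (kl!(j-1))) (lam(1,j-1)) (lam(2,j-1)) (lam(1,j)) (lam(2,j))))
      * ennreal (exp (-(v * (lam(1,N) - lam(2,N)))))"

lemma Wt_meas[measurable]: "(\<lambda>\<mu>. Wt N v kl k (mrg U lam \<mu>)) \<in> borel_measurable (PiM U (\<lambda>_. lborel))"
  unfolding Wt_def by measurable

definition Ub :: "nat \<Rightarrow> nat \<Rightarrow> (nat \<times> nat) set" where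
  "Ub N m = {1,2} \<times> {m..N}"

lemma Wt_step: "k < N \<Longrightarrow> Wt N v kl k lam = ennreal (kern (fst (kl!k)) (snd (kl!k)) (lam(1,k)) (lam(2,k)) (lam(1,Suc k)) (lam(2,Suc k))) * Wt N v kl (Suc k) lam"
proof -
  assume k: "k < N"
  have "{Suc k..N} = insert (Suc k) {Suc (Suc k)..N}" using k by auto
  then show ?thesis unfolding Wt_def by (simp add: mult.assoc)
qed

lemma Wt_cong: "k \<le> N \<Longrightarrow> (\<And>i j. i \<in> {1,2} \<Longrightarrow> j \<in> {k..N} \<Longrightarrow> lam1 (i,j) = lam2 (i,j)) \<Longrightarrow> Wt N v kl k lam1 = Wt N v kl k lam2"
  unfolding Wt_def
proof -
  assume kN: "k \<le> N"
  assume H: "\<And>i j. i \<in> {1,2} \<Longrightarrow> j \<in> {k..N} \<Longrightarrow> lam1 (i,j) = lam2 (i,j)"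
  have "(\<Prod>j\<in>{Suc k..N}. ennreal (kern (fst (kl!(j-1))) (snd (kl!(j-1))) (lam1(1,j-1)) (lam1(2,j-1)) (lam1(1,j)) (lam1(2,j))))
      = (\<Prod>j\<in>{Suc k..N}. ennreal (kern (fst (kl!(j-1))) (snd (kl!(j-1))) (lam2(1,j-1)) (lam2(2,j-1)) (lam2(1,j)) (lam2(2,j))))"
  proof (rule prod.cong)
    fix j assume j: "j \<in> {Suc k..N}"
    then have "j - 1 \<in> {k..N}" "j \<in> {k..N}" by auto
    then show "ennreal (kern (fst (kl!(j-1))) (snd (kl!(j-1))) (lam1(1,j-1)) (lam1(2,j-1)) (lam1(1,j)) (lam1(2,j)))
      = ennreal (kern (fst (kl!(j-1))) (snd (kl!(j-1))) (lam2(1,j-1)) (lam2(2,j-1)) (lam2(1,j)) (lam2(2,j)))"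
      using H by simp
  qed simp
  moreover have "lam1 (1,N) = lam2 (1,N)" "lam1 (2,N) = lam2 (2,N)" using H[of 1 N] H[of 2 N] kN by auto
  ultimately show "(\<Prod>j\<in>{Suc k..N}. ennreal (kern (fst (kl!(j-1))) (snd (kl!(j-1))) (lam1(1,j-1)) (lam1(2,j-1)) (lam1(1,j)) (lam1(2,j)))) * ennreal (exp (-(v * (lam1(1,N) - lam1(2,N)))))
    = (\<Prod>j\<in>{Suc k..N}. ennreal (kern (fst (kl!(j-1))) (snd (kl!(j-1))) (lam2(1,j-1)) (lam2(2,j-1)) (lam2(1,j)) (lam2(2,j)))) * ennreal (exp (-(v * (lam2(1,N) - lam2(2,N)))))"
    by simp
qed

lemma pair_integral:
  fixes f :: "real \<Rightarrow> real \<Rightarrow> ennreal"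
  assumes [measurable]: "case_prod f \<in> borel_measurable (lborel \<Otimes>\<^sub>M lborel)" and "i1 \<noteq> i2"
  shows "(\<integral>\<^sup>+\<sigma>. f (\<sigma> i1) (\<sigma> i2) \<partial>PiM {i1, i2} (\<lambda>_::nat\<times>nat. lborel)) = (\<integral>\<^sup>+y1. \<integral>\<^sup>+y2. f y1 y2 \<partial>lborel \<partial>lborel)"
proof -
  have "(\<integral>\<^sup>+\<sigma>. f (\<sigma> i1) (\<sigma> i2) \<partial>PiM {i1, i2} (\<lambda>_::nat\<times>nat. lborel)) = (\<integral>\<^sup>+z. f (fst z) (snd z) \<partial>(lborel \<Otimes>\<^sub>M lborel))"
    using PS.product_nn_integral_pair[of f i1 i2] assms by simp
  also have "\<dots> = (\<integral>\<^sup>+y1. \<integral>\<^sup>+y2. f y1 y2 \<partial>lborel \<partial>lborel)"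
    using lborel.nn_integral_fst[of "case_prod f" lborel] by (simp add: case_prod_beta')
  finally show ?thesis .
qed

lemma rep_ind:
  assumes len: "length kl = N" and k: "k \<le> N"
  shows "(\<integral>\<^sup>+\<mu>. Wt N v kl k (mrg (Ub N (Suc k)) lam \<mu>) \<partial>PiM (Ub N (Suc k)) (\<lambda>_. lborel)) = chain v (drop k kl) (lam(1,k)) (lam(2,k))"
  using k
proof (induction k arbitrary: lam rule: inc_induct)
  case base
  have U: "Ub N (Suc N) = {}" unfolding Ub_def by auto
  show ?case unfolding U PiM_empty using len
    by (simp add: nn_integral_count_space_finite Wt_def mrg_def)
next
  case (step k)
  define L where "L = {(1::nat, Suc k), (2, Suc k)}"
  define U' where "U' = Ub N (Suc (Suc k))"
  have U: "Ub N (Suc k) = L \<union> U'" unfolding L_def U'_def Ub_def using step.hyps by auto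
  have disj: "L \<inter> U' = {}" unfolding L_def U'_def Ub_def by auto
  have fin: "finite L" "finite U'" unfolding L_def U'_def Ub_def by auto
  obtain b a where kk: "kl ! k = (b, a)" by force
  have "(\<integral>\<^sup>+\<mu>. Wt N v kl k (mrg (Ub N (Suc k)) lam \<mu>) \<partial>PiM (Ub N (Suc k)) (\<lambda>_. lborel))
     = (\<integral>\<^sup>+x. \<integral>\<^sup>+y. Wt N v kl k (mrg (L \<union> U') lam (merge L U' (x, y))) \<partial>PiM U' (\<lambda>_. lborel) \<partial>PiM L (\<lambda>_. lborel))"
    unfolding U by (rule PS.product_nn_integral_fold[OF disj fin]) measurable
  also have "\<dots> = (\<integral>\<^sup>+x. \<integral>\<^sup>+y. ennreal (kern b a (lam(1,k)) (lam(2,k)) (x(1,Suc k)) (x(2,Suc k))) * Wt N v kl (Suc k) (mrg U' (mrg L lam x) y) \<partial>PiM U' (\<lambda>_. lborel) \<partial>PiM L (\<lambda>_. lborel))"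
  proof (intro nn_integral_cong)
    fix x y
    have e: "mrg (L \<union> U') lam (merge L U' (x, y)) = mrg U' (mrg L lam x) y"
      using disj by (auto simp: mrg_def merge_def fun_eq_iff)
    have v1: "mrg U' (mrg L lam x) y (i, k) = lam (i,k)" for i unfolding mrg_def L_def U'_def Ub_def by auto
    have v2: "mrg U' (mrg L lam x) y (i, Suc k) = x (i, Suc k)" if "i \<in> {1,2}" for i
      using that unfolding mrg_def L_def U'_def Ub_def by auto
    show "Wt N v kl k (mrg (L \<union> U') lam (merge L U' (x, y))) = ennreal (kern b a (lam(1,k)) (lam(2,k)) (x(1,Suc k)) (x(2,Suc k))) * Wt N v kl (Suc k) (mrg U' (mrg L lam x) y)"
      unfolding e using step.hyps by (simp add: Wt_step kk v1 v2)
  qed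
  also have "\<dots> = (\<integral>\<^sup>+x. ennreal (kern b a (lam(1,k)) (lam(2,k)) (x(1,Suc k)) (x(2,Suc k))) * chain v (drop (Suc k) kl) (x(1,Suc k)) (x(2,Suc k)) \<partial>PiM L (\<lambda>_. lborel))"
  proof (intro nn_integral_cong)
    fix x
    have "(\<integral>\<^sup>+y. Wt N v kl (Suc k) (mrg U' (mrg L lam x) y) \<partial>PiM U' (\<lambda>_. lborel)) = chain v (drop (Suc k) kl) (mrg L lam x (1, Suc k)) (mrg L lam x (2, Suc k))"
      using step.IH unfolding U'_def .
    moreover have "mrg L lam x (1, Suc k) = x (1, Suc k)" "mrg L lam x (2, Suc k) = x (2, Suc k)" unfolding mrg_def L_def by auto
    ultimately show "(\<integral>\<^sup>+y. ennreal (kern b a (lam(1,k)) (lam(2,k)) (x(1,Suc k)) (x(2,Suc k))) * Wt N v kl (Suc k) (mrg U' (mrg L lam x) y) \<partial>PiM U' (\<lambda>_. lborel))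
      = ennreal (kern b a (lam(1,k)) (lam(2,k)) (x(1,Suc k)) (x(2,Suc k))) * chain v (drop (Suc k) kl) (x(1,Suc k)) (x(2,Suc k))"
      by (simp add: nn_integral_cmult)
  qed
  also have "\<dots> = (\<integral>\<^sup>+y1. \<integral>\<^sup>+y2. ennreal (kern b a (lam(1,k)) (lam(2,k)) y1 y2) * chain v (drop (Suc k) kl) y1 y2 \<partial>lborel \<partial>lborel)"
    unfolding L_def
    apply (rule pair_integral)
     apply measurable
    done
  also have "\<dots> = chain v (drop k kl) (lam(1,k)) (lam(2,k))"
  proof -
    have "drop k kl = (b,a) # drop (Suc k) kl" using step.hyps len kk by (metis Cons_nth_drop_Suc)
    then show ?thesis by simp
  qed
  finally show ?case .
qed

lemma length_lab[simp]: "length (lab N a p q s) = length s"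
  by (induction s arbitrary: p q) auto

lemma lab_nth: "i < length s \<Longrightarrow> lab N a p q s ! i = (s!i, if s!i then alpha_ext N a (p + int (length (filter id (take (Suc i) s))))
     else alpha_ext N a (q - int (length (filter Not (take i s)))))"
proof (induction s arbitrary: p q i)
  case Nil
  then show ?case by simp
next
  case (Cons b s)
  show ?case
  proof (cases i)
    case 0
    then show ?thesis by simp
  next
    case (Suc i')
    then have i': "i' < length s" using Cons.prems by simp
    show ?thesis
    proof (cases b)
      case True
      then show ?thesis using Cons.IH[OF i', of "p+1" q] Suc by (simp add: algebra_simps)
    next
      case False
      then show ?thesis using Cons.IH[OF i', of p "q-1"] Suc by (simp add: algebra_simps)
    qed
  qed
qed

lemma kl_nth:
  assumes "j \<in> {1..length s}"
  shows "lab N a m0 m0 s ! (j-1) = (s!(j-1), edge_label N a m0 s j)"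
proof -
  have j: "j - 1 < length s" "Suc (j-1) = j" using assms by auto
  show ?thesis unfolding lab_nth[OF j(1)] edge_label_def path_vertex_def j(2) by simp
qed

lemma wt_factor:
  assumes len: "length s = N"
  shows "ennreal (wt_LG N a u v m0 s lam) = ennreal (exp (-(u*(lam(1,0) - lam(2,0))))) * Wt N v (lab N a m0 m0 s) 0 lam"
proof -
  let ?kl = "lab N a m0 m0 s"
  have pj: "(\<Prod>i\<in>{1,2::nat}. ffun (edge_label N a m0 s j) (lam (i, up_idx s j) - lam (i, low_idx s j)))
        * exp (- exp (- (lam (1, low_idx s j) - lam (2, up_idx s j))))
      = kern (fst (?kl!(j-1))) (snd (?kl!(j-1))) (lam(1,j-1)) (lam(2,j-1)) (lam(1,j)) (lam(2,j))"
    if j: "j \<in> {1..N}" for j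
  proof -
    have "?kl!(j-1) = (s!(j-1), edge_label N a m0 s j)" using kl_nth[of j s] j len by simp
    then show ?thesis unfolding up_idx_def low_idx_def kern_def by simp
  qed
  have nn: "0 \<le> kern b c x1 x2 y1 y2" for b c x1 x2 y1 y2 by (rule kern_nonneg)
  have "wt_LG N a u v m0 s lam = exp (-(u*(lam(1,0) - lam(2,0)))) * exp (-(v * (lam(1,N) - lam(2,N))))
       * (\<Prod>j\<in>{1..N}. kern (fst (?kl!(j-1))) (snd (?kl!(j-1))) (lam(1,j-1)) (lam(2,j-1)) (lam(1,j)) (lam(2,j)))"
  proof -
    have P: "(\<Prod>j\<in>{1..N}. (\<Prod>i\<in>{1,2::nat}. ffun (edge_label N a m0 s j) (lam (i, up_idx s j) - lam (i, low_idx s j)))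
        * exp (- exp (- (lam (1, low_idx s j) - lam (2, up_idx s j)))))
      = (\<Prod>j\<in>{1..N}. kern (fst (?kl!(j-1))) (snd (?kl!(j-1))) (lam(1,j-1)) (lam(2,j-1)) (lam(1,j)) (lam(2,j)))"
      by (rule prod.cong[OF refl]) (rule pj)
    show ?thesis unfolding wt_LG_def P by simp
  qed
  then have "ennreal (wt_LG N a u v m0 s lam) = ennreal (exp (-(u*(lam(1,0) - lam(2,0))))) * ennreal (exp (-(v * (lam(1,N) - lam(2,N)))))
       * (\<Prod>j\<in>{1..N}. ennreal (kern (fst (?kl!(j-1))) (snd (?kl!(j-1))) (lam(1,j-1)) (lam(2,j-1)) (lam(1,j)) (lam(2,j))))"
    by (simp add: ennreal_mult prod_ennreal nn prod_nonneg)
  then show ?thesis unfolding Wt_def by (simp add: mult_ac)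
qed

lemma int_vars_split: "int_vars N = {(2,0)} \<union> Ub N 1"
  unfolding int_vars_def Ub_def by auto

theorem representation:
  assumes len: "length s = N"
  shows "Z_LG N a u v m0 s x0 = Zabs u v x0 (lab N a m0 m0 s)"
proof -
  let ?kl = "lab N a m0 m0 s"
  let ?c = "mrg (int_vars N) (\<lambda>_. x0)"
  have "Z_LG N a u v m0 s x0 = (\<integral>\<^sup>+lam. ennreal (exp (-(u*(x0 - ?c lam (2,0))))) * Wt N v ?kl 0 (?c lam) \<partial>PiM (int_vars N) (\<lambda>_. lborel))"
    unfolding Z_LG_def
  proof (intro nn_integral_cong)
    fix lam :: "nat \<times> nat \<Rightarrow> real"
    have "Wt N v ?kl 0 (lam((1,0):=x0)) = Wt N v ?kl 0 (?c lam)"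
      by (rule Wt_cong) (auto simp: mrg_def int_vars_def)
    moreover have "?c lam (2,0) = lam (2,0)" by (simp add: mrg_def int_vars_def)
    ultimately show "ennreal (wt_LG N a u v m0 s (lam((1,0):=x0))) = ennreal (exp (-(u*(x0 - ?c lam (2,0))))) * Wt N v ?kl 0 (?c lam)"
      unfolding wt_factor[OF len] by simp
  qed
  also have "\<dots> = (\<integral>\<^sup>+x. \<integral>\<^sup>+y. ennreal (exp (-(u*(x0 - ?c (merge {(2,0)} (Ub N 1) (x,y)) (2,0))))) * Wt N v ?kl 0 (?c (merge {(2,0)} (Ub N 1) (x,y)))
       \<partial>PiM (Ub N 1) (\<lambda>_. lborel) \<partial>PiM {(2,0)} (\<lambda>_. lborel))"
    unfolding int_vars_split
    by (rule PS.product_nn_integral_fold) (auto simp: Ub_def simp del: insert_is_Un)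
  also have "\<dots> = (\<integral>\<^sup>+x. ennreal (exp (-(u*(x0 - x (2::nat,0))))) * chain v ?kl x0 (x (2::nat,0)) \<partial>PiM {(2::nat,0::nat)} (\<lambda>_. lborel))"
  proof (intro nn_integral_cong)
    fix x :: "nat \<times> nat \<Rightarrow> real"
    define lamx where "lamx = (\<lambda>i. if i = (1,0) then x0 else x i)"
    have "\<And>y. Wt N v ?kl 0 (?c (merge {(2,0)} (Ub N 1) (x,y))) = Wt N v ?kl 0 (mrg (Ub N 1) lamx y)"
      by (rule Wt_cong) (auto simp: mrg_def merge_def int_vars_def Ub_def lamx_def)
    moreover have "\<And>y. ?c (merge {(2,0)} (Ub N 1) (x,y)) (2,0) = x (2,0)"
      by (simp add: mrg_def merge_def int_vars_def)
    ultimately have "(\<integral>\<^sup>+y. ennreal (exp (-(u*(x0 - ?c (merge {(2,0)} (Ub N 1) (x,y)) (2,0))))) * Wt N v ?kl 0 (?c (merge {(2,0)} (Ub N 1) (x,y))) \<partial>PiM (Ub N 1) (\<lambda>_. lborel))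
       = ennreal (exp (-(u*(x0 - x (2,0))))) * (\<integral>\<^sup>+y. Wt N v ?kl 0 (mrg (Ub N 1) lamx y) \<partial>PiM (Ub N 1) (\<lambda>_. lborel))"
      by (simp add: nn_integral_cmult)
    also have "(\<integral>\<^sup>+y. Wt N v ?kl 0 (mrg (Ub N 1) lamx y) \<partial>PiM (Ub N 1) (\<lambda>_. lborel)) = chain v ?kl x0 (x (2,0))"
      using rep_ind[of ?kl N 0 v lamx] len by (simp add: lamx_def)
    finally show "(\<integral>\<^sup>+y. ennreal (exp (-(u*(x0 - ?c (merge {(2,0)} (Ub N 1) (x,y)) (2,0))))) * Wt N v ?kl 0 (?c (merge {(2,0)} (Ub N 1) (x,y))) \<partial>PiM (Ub N 1) (\<lambda>_. lborel))
       = ennreal (exp (-(u*(x0 - x (2,0))))) * chain v ?kl x0 (x (2,0))" .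
  qed
  also have "\<dots> = Zabs u v x0 ?kl"
    unfolding Zabs_def by (rule PS.product_nn_integral_singleton) measurable
  finally show ?thesis .
qed


theorem proposition3p12:
  fixes N :: nat and a :: "nat \<Rightarrow> real" and u v :: real
  assumes "N \<ge> 1"
    and "\<forall>i\<in>{1..N}. \<forall>j\<in>{1..N}. a i + a j > 0"
    and "\<forall>i\<in>{1..N}. a i + u > 0"
    and "\<forall>i\<in>{1..N}. a i + v > 0"
    and "u + v > 0"
  shows "\<exists>Z::ennreal. Z < \<infinity> \<and>
           (\<forall>m0 s x0. is_down_right_path N m0 s \<longrightarrow> Z_LG N a u v m0 s x0 = Z)"
proof (intro exI conjI allI impI)
  show "Zabs u v 0 (lab N a 0 0 (replicate N True)) < \<infinity>"
    using canonical_finite[OF assms] .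
next
  fix m0 s x0
  assume p: "is_down_right_path N m0 s"
  then have len: "length s = N" and st: "in_strip N (path_vertex m0 s N)"
    unfolding is_down_right_path_def by auto
  have "m0 - int (length (filter Not s)) \<ge> 0"
    using st len unfolding in_strip_def path_vertex_def by simp
  then have vm: "int (length (filter Not s)) \<le> m0" and m0: "m0 \<ge> 0" by auto
  have "Z_LG N a u v m0 s x0 = Zabs u v x0 (lab N a m0 m0 s)"
    by (rule representation[OF len])
  also have "\<dots> = Zabs u v 0 (lab N a 0 0 (replicate N True))"
    by (rule path_indep[OF assms(1) m0 len vm])
  finally show "Z_LG N a u v m0 s x0 = Zabs u v 0 (lab N a 0 0 (replicate N True))" .
qed

end
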